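(* Let $m,n\ge1$ and let $\mathcal M_{n,m}$ be the set of Dyck paths of semilength $nm$ in which every maximal run of consecutive up-steps has length divisible by $m$, ordered by the Tamari order (the $m$-Tamari lattice). Then the map $[P,Q]\mapsto \mathrm{IP}(P,Q)$ restricts to a bijection from the set of pairs $P\le Q$ with $P,Q\in\mathcal M_{n,m}$ onto the set of Tamari interval-posets $\triangleleft$ of size $nm$ satisfying, for every $1\le i\le n$, $im\triangleleft im-1\triangleleft \cdots\triangleleft im-(m-1)$.
   Context: A Dyck path of semilength $N$ is a word in up-steps $U$ and down-steps $D$ with $N$ of each, every prefix having at least as many $U$ as $D$; each up-step is matched with the first later down-step returning to its starting height. Tamari order: a rotation takes a down-step $D$ immediately followed by an up-step, lets $W$ be the shortest nonempty factor starting right after this $D$ that is itself a Dyck path, and replaces $DW$ by $WD$; the Tamari order is the reflexive–transitive closure. Label up-steps $1,\dots,N$ left to right. $\mathrm{dec}(P)=\{(j,i): j\ne i,\ \text{up-step } j \text{ lies strictly between up-step } i \text{ and its matching down-step}\}$; $\mathrm{inc}(Q)$ is the transitive closure of the relation containing $(i,k)$ whenever $k$ is the first up-step after the down-step matched with $i$. $\mathrm{IP}(P,Q)$ is the reflexive transitive closure of $\mathrm{dec}(P)\cup\mathrm{inc}(Q)$, written $x\triangleleft y$. A Tamari interval-poset of size $N$ is a partial order $\triangleleft$ on $[N]$ such that for all $a<b<c$: $a\triangleleft c\Rightarrow b\triangleleft c$ and $c\triangleleft a\Rightarrow b\triangleleft a$. *)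

theory Defs
  imports Main
begin

text \<open>Dyck paths are boolean lists: True = up-step U, False = down-step D.\<close>

definition height :: "bool list \<Rightarrow> nat \<Rightarrow> int" where
  "height w k = int (count_list (take k w) True) - int (count_list (take k w) False)"

definition dyck :: "nat \<Rightarrow> bool list \<Rightarrow> bool" where
  "dyck N w \<longleftrightarrow> length w = 2 * N \<and> count_list w True = N \<and>
     (\<forall>k \<le> length w. height w k \<ge> 0)"

definition balanced :: "bool list \<Rightarrow> bool" where
  "balanced w \<longleftrightarrow> dyck (length w div 2) w \<and> even (length w)"

definition rotation :: "bool list \<Rightarrow> bool list \<Rightarrow> bool" where
  "rotation P P' \<longleftrightarrow> (\<exists>xs W zs. P = xs @ [False] @ W @ zs \<and> W \<noteq> [] \<and> hd W = True \<and>
      balanced W \<and> (\<forall>k. 0 < k \<and> k < length W \<longrightarrow> \<not> balanced (take k W)) \<and>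
      P' = xs @ W @ [False] @ zs)"

definition tamari_le :: "bool list \<Rightarrow> bool list \<Rightarrow> bool" where
  "tamari_le P Q \<longleftrightarrow> (P, Q) \<in> {(a, b). rotation a b}\<^sup>*"

text \<open>Position (0-indexed) in w of up-step number i (up-steps labelled 1..N left to right).\<close>
definition up_pos :: "bool list \<Rightarrow> nat \<Rightarrow> nat" where
  "up_pos w i = (THE p. p < length w \<and> w ! p \<and> count_list (take p w) True = i - 1)"

definition match_pos :: "bool list \<Rightarrow> nat \<Rightarrow> nat" where
  "match_pos w p = (LEAST q. p < q \<and> q < length w \<and> \<not> w ! q \<and> height w (Suc q) = height w p)"

definition dec :: "nat \<Rightarrow> bool list \<Rightarrow> (nat \<times> nat) set" where
  "dec N P = {(j, i). j \<in> {1..N} \<and> i \<in> {1..N} \<and> j \<noteq> i \<and>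
      up_pos P i < up_pos P j \<and> up_pos P j < match_pos P (up_pos P i)}"

definition inc_base :: "nat \<Rightarrow> bool list \<Rightarrow> (nat \<times> nat) set" where
  "inc_base N Q = {(i, k). i \<in> {1..N} \<and> k \<in> {1..N} \<and>
      match_pos Q (up_pos Q i) < up_pos Q k \<and>
      (\<forall>l \<in> {1..N}. match_pos Q (up_pos Q i) < up_pos Q l \<longrightarrow> up_pos Q k \<le> up_pos Q l)}"

definition inc :: "nat \<Rightarrow> bool list \<Rightarrow> (nat \<times> nat) set" where
  "inc N Q = (inc_base N Q)\<^sup>+"

definition IP :: "nat \<Rightarrow> bool list \<Rightarrow> bool list \<Rightarrow> (nat \<times> nat) set" where
  "IP N P Q = Id_on {1..N} \<union> (dec N P \<union> inc N Q)\<^sup>+"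

definition interval_poset :: "nat \<Rightarrow> (nat \<times> nat) set \<Rightarrow> bool" where
  "interval_poset N R \<longleftrightarrow> R \<subseteq> {1..N} \<times> {1..N} \<and>
     (\<forall>x \<in> {1..N}. (x, x) \<in> R) \<and> trans R \<and> antisym R \<and>
     (\<forall>a b c. 1 \<le> a \<and> a < b \<and> b < c \<and> c \<le> N \<longrightarrow>
        ((a, c) \<in> R \<longrightarrow> (b, c) \<in> R) \<and> ((c, a) \<in> R \<longrightarrow> (b, a) \<in> R))"

definition runs_div :: "nat \<Rightarrow> bool list \<Rightarrow> bool" where
  "runs_div m w \<longleftrightarrow> (\<forall>a b. a \<le> b \<and> b \<le> length w \<and> (\<forall>k. a \<le> k \<and> k < b \<longrightarrow> w ! k) \<and>
      (a = 0 \<or> \<not> w ! (a - 1)) \<and> (b = length w \<or> \<not> w ! b) \<longrightarrow> m dvd (b - a))"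

definition mpaths :: "nat \<Rightarrow> nat \<Rightarrow> bool list set" where
  "mpaths n m = {w. dyck (n * m) w \<and> runs_div m w}"

definition chain_cond :: "nat \<Rightarrow> nat \<Rightarrow> (nat \<times> nat) set \<Rightarrow> bool" where
  "chain_cond n m R \<longleftrightarrow> (\<forall>i \<in> {1..n}. \<forall>k. k + 1 < m \<longrightarrow> (i * m - k, i * m - k - 1) \<in> R)"

end

theory Submission
  imports Defs
begin

definition cnt :: "bool list \<Rightarrow> nat \<Rightarrow> nat" where
  "cnt w k = count_list (take k w) True"

lemma count_TF: "count_list xs True + count_list xs False = length (xs::bool list)"
  by (induction xs) auto

lemma cnt_Suc: "k < length w \<Longrightarrow> cnt w (Suc k) = cnt w k + (if w!k then 1 else 0)"
  by (simp add: cnt_def take_Suc_conv_app_nth)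

lemma cnt_mono: "k \<le> k' \<Longrightarrow> cnt w k \<le> cnt w k'"
proof -
  assume "k \<le> k'"
  then obtain d where "k' = k + d" by (metis le_add_diff_inverse)
  then show ?thesis by (simp add: cnt_def take_add)
qed

lemma cnt_le: "cnt w k \<le> k"
  proof -
  have "count_list (take k w) True \<le> length (take k w)" by (rule count_le_length)
  then show ?thesis unfolding cnt_def by simp
qed

lemma cnt_len: "k \<ge> length w \<Longrightarrow> cnt w k = count_list w True"
  by (simp add: cnt_def)

lemma height_cnt: "k \<le> length w \<Longrightarrow> height w k = int (cnt w k) - int (k - cnt w k)"
proof -
  assume k: "k \<le> length w"
  have "count_list (take k w) True + count_list (take k w) False = k"
    using count_TF[of "take k w"] k by simp
  then show ?thesis unfolding height_def cnt_def by simp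
qed

lemma height_Suc: "k < length w \<Longrightarrow> height w (Suc k) = height w k + (if w!k then 1 else -1)"
  by (simp add: height_def take_Suc_conv_app_nth)

lemma height_0[simp]: "height w 0 = 0"
  by (simp add: height_def)

lemma dyck_len: "dyck N w \<Longrightarrow> length w = 2 * N"
  by (simp add: dyck_def)
lemma dyck_cnt: "dyck N w \<Longrightarrow> count_list w True = N"
  by (simp add: dyck_def)
lemma dyck_nonneg: "dyck N w \<Longrightarrow> k \<le> length w \<Longrightarrow> height w k \<ge> 0"
  by (simp add: dyck_def)
lemma dyck_end: "dyck N w \<Longrightarrow> height w (length w) = 0"
proof -
  assume d: "dyck N w"
  have "count_list w True + count_list w False = 2 * N" using count_TF[of w] d by (simp add: dyck_def)
  then show ?thesis using d by (simp add: dyck_def height_def)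
qed

lemma up_pos_char:
  assumes "p < length w" "w ! p"
  shows "up_pos w (Suc (cnt w p)) = p"
proof -
  have uniq: "q = p" if "q < length w" "w ! q" "cnt w q = cnt w p" for q
  proof (rule ccontr)
    assume "q \<noteq> p"
    then consider "q < p" | "p < q" by linarith
    then show False
    proof cases
      case 1
      have "cnt w (Suc q) \<le> cnt w p" using 1 cnt_mono by simp
      then show False using cnt_Suc[of q w] that by simp
    next
      case 2
      have "cnt w (Suc p) \<le> cnt w q" using 2 cnt_mono by simp
      then show False using cnt_Suc[of p w] assms that by simp
    qed
  qed
  have "\<And>q. q < length w \<and> w ! q \<and> count_list (take q w) True = Suc (cnt w p) - 1 \<Longrightarrow> q = p"
    using uniq unfolding cnt_def by simp
  moreover have "p < length w \<and> w ! p \<and> count_list (take p w) True = Suc (cnt w p) - 1"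
    using assms unfolding cnt_def by simp
  ultimately show ?thesis unfolding up_pos_def by (rule the_equality[rotated])
qed

lemma up_pos_ex:
  assumes "1 \<le> i" "i \<le> count_list w True"
  shows "\<exists>p<length w. w ! p \<and> cnt w p = i - 1"
proof -
  define p where "p = (LEAST p. i \<le> cnt w (Suc p))"
  have ex: "i \<le> cnt w (Suc (length w))" using assms cnt_len[of w "Suc (length w)"] by simp
  have p1: "i \<le> cnt w (Suc p)" unfolding p_def by (rule LeastI[where P="\<lambda>p. i \<le> cnt w (Suc p)", OF ex])
  have p2: "\<not> i \<le> cnt w p"
  proof (cases p)
    case 0 then show ?thesis using assms by (simp add: cnt_def)
  next
    case (Suc q)
    have "q < p" using Suc by simp
    then show ?thesis using not_less_Least[of q "\<lambda>p. i \<le> cnt w (Suc p)"] Suc unfolding p_def by simp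
  qed
  have pl: "p < length w"
  proof (rule ccontr)
    assume "\<not> p < length w"
    then have "cnt w p = count_list w True" by (simp add: cnt_len)
    then show False using p2 assms by simp
  qed
  have "cnt w (Suc p) = cnt w p + (if w!p then 1 else 0)" using cnt_Suc pl by simp
  then have "w ! p" "cnt w p = i - 1" using p1 p2 by (auto split: if_splits)
  then show ?thesis using pl by blast
qed

lemma up_pos_props:
  assumes "1 \<le> i" "i \<le> count_list w True"
  shows "up_pos w i < length w" "w ! up_pos w i" "cnt w (up_pos w i) = i - 1"
proof -
  obtain p where p: "p < length w" "w ! p" "cnt w p = i - 1" using up_pos_ex[OF assms] by blast
  have "up_pos w i = p" using up_pos_char[OF p(1,2)] p(3) assms by simp
  then show "up_pos w i < length w" "w ! up_pos w i" "cnt w (up_pos w i) = i - 1" using p by auto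
qed

lemma less_pos_iff:
  assumes "p < length w" "w ! p"
  shows "p < r \<longleftrightarrow> Suc (cnt w p) \<le> cnt w r"
proof
  assume "p < r"
  then have "cnt w (Suc p) \<le> cnt w r" by (simp add: cnt_mono)
  then show "Suc (cnt w p) \<le> cnt w r" using cnt_Suc[OF assms(1)] assms(2) by simp
next
  assume "Suc (cnt w p) \<le> cnt w r"
  then show "p < r" using cnt_mono[of r p w] by (meson not_less not_less_eq_eq)
qed

lemma up_pos_mono:
  assumes "1 \<le> i" "i < j" "j \<le> count_list w True"
  shows "up_pos w i < up_pos w j"
proof -
  have "Suc (cnt w (up_pos w i)) \<le> cnt w (up_pos w j)"
    using up_pos_props[of i w] up_pos_props[of j w] assms by simp
  then show ?thesis using less_pos_iff[of "up_pos w i" w] up_pos_props[of i w] assms by simp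
qed


lemma match_aux:
  assumes "p < length w" "w ! p" "p < k" "k \<le> length w"
    and "\<forall>q<k. \<not> (p < q \<and> q < length w \<and> \<not> w ! q \<and> height w (Suc q) = height w p)"
  shows "height w k > height w p"
  using assms(3-5)
proof (induction k)
  case 0 then show ?case by simp
next
  case (Suc k)
  show ?case
  proof (cases "k = p")
    case True
    then show ?thesis using height_Suc[of p w] assms(1,2) by simp
  next
    case False
    then have kp: "p < k" using Suc.prems by simp
    have IH: "height w k > height w p" using Suc.IH kp Suc.prems by simp
    have kl: "k < length w" using Suc.prems by simp
    show ?thesis
    proof (cases "w ! k")
      case True then show ?thesis using height_Suc[OF kl] IH by simp
    next
      case False
      have "height w (Suc k) \<noteq> height w p" using Suc.prems(3) kp kl False by auto
      then show ?thesis using height_Suc[OF kl] IH False by simp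
    qed
  qed
qed

lemma match_props:
  assumes d: "dyck N w" and p: "p < length w" "w ! p"
  shows "p < match_pos w p" "match_pos w p < length w" "\<not> w ! match_pos w p"
    "height w (Suc (match_pos w p)) = height w p"
    "\<And>k. p < k \<Longrightarrow> k \<le> match_pos w p \<Longrightarrow> height w k > height w p"
proof -
  define Pq where "Pq q \<longleftrightarrow> p < q \<and> q < length w \<and> \<not> w ! q \<and> height w (Suc q) = height w p" for q
  have ex: "\<exists>q. Pq q"
  proof (rule ccontr)
    assume "\<not> (\<exists>q. Pq q)"
    then have "height w (length w) > height w p"
      using match_aux[OF p _ order.refl] p(1) unfolding Pq_def by blast
    moreover have "height w p \<ge> 0" using dyck_nonneg[OF d] p by simp
    ultimately show False using dyck_end[OF d] by simp
  qed
  have mq: "match_pos w p = (LEAST q. Pq q)" unfolding match_pos_def Pq_def by simp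
  have "Pq (match_pos w p)" unfolding mq by (rule LeastI_ex[OF ex])
  then show "p < match_pos w p" "match_pos w p < length w" "\<not> w ! match_pos w p"
    "height w (Suc (match_pos w p)) = height w p" unfolding Pq_def by auto
  fix k assume k: "p < k" "k \<le> match_pos w p"
  have "\<forall>q<k. \<not> Pq q" using k(2) not_less_Least[of _ Pq] unfolding mq by fastforce
  then show "height w k > height w p"
    using match_aux[OF p k(1)] k \<open>match_pos w p < length w\<close> unfolding Pq_def by simp
qed

lemma inside_iff:
  assumes d: "dyck N w" and p: "p < length w" "w ! p" and r: "p < r"
  shows "(\<forall>k. p < k \<and> k \<le> r \<longrightarrow> height w k > height w p) \<longleftrightarrow> r \<le> match_pos w p"
proof
  assume a: "\<forall>k. p < k \<and> k \<le> r \<longrightarrow> height w k > height w p"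
  show "r \<le> match_pos w p"
  proof (rule ccontr)
    assume "\<not> r \<le> match_pos w p"
    then have "Suc (match_pos w p) \<le> r" by simp
    then show False using a match_props[OF d p] by (metis less_Suc_eq less_irrefl order.strict_trans)
  qed
next
  assume "r \<le> match_pos w p"
  then show "\<forall>k. p < k \<and> k \<le> r \<longrightarrow> height w k > height w p" using match_props(5)[OF d p] by simp
qed

definition EP :: "bool list \<Rightarrow> nat \<Rightarrow> nat" where
  "EP w i = cnt w (match_pos w (up_pos w i))"

definition validE :: "nat \<Rightarrow> (nat \<Rightarrow> nat) \<Rightarrow> bool" where
  "validE N E \<longleftrightarrow> (\<forall>i\<in>{1..N}. i \<le> E i \<and> E i \<le> N \<and> (\<forall>j. i < j \<and> j \<le> E i \<longrightarrow> E j \<le> E i))"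

definition decE :: "nat \<Rightarrow> (nat \<Rightarrow> nat) \<Rightarrow> (nat \<times> nat) set" where
  "decE N E = {(j, i). i \<in> {1..N} \<and> i < j \<and> j \<le> E i}"

definition incbE :: "nat \<Rightarrow> (nat \<Rightarrow> nat) \<Rightarrow> (nat \<times> nat) set" where
  "incbE N E = {(i, k). i \<in> {1..N} \<and> E i < N \<and> k = Suc (E i)}"

definition incE :: "nat \<Rightarrow> (nat \<Rightarrow> nat) \<Rightarrow> (nat \<times> nat) set" where
  "incE N E = (incbE N E)\<^sup>+"

lemma up_props:
  assumes d: "dyck N w" and i: "1 \<le> i" "i \<le> N"
  shows "up_pos w i < length w" "w ! up_pos w i" "cnt w (up_pos w i) = i - 1"
  using up_pos_props[of i w] dyck_cnt[OF d] i by auto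

lemma up_mono_iff:
  assumes d: "dyck N w" and "i \<in> {1..N}" "j \<in> {1..N}"
  shows "up_pos w i < up_pos w j \<longleftrightarrow> i < j"
  using up_pos_mono[of i j w] up_pos_mono[of j i w] dyck_cnt[OF d] assms
  by (metis atLeastAtMost_iff less_asym' linorder_neqE_nat)

lemma cnt_le_N: "dyck N w \<Longrightarrow> cnt w k \<le> N"
  using cnt_mono[of k "max k (length w)" w] cnt_len[of w "max k (length w)"] dyck_cnt[of N w] by simp

lemma EP_bounds:
  assumes d: "dyck N w" and i: "1 \<le> i" "i \<le> N"
  shows "i \<le> EP w i" "EP w i \<le> N"
proof -
  have "up_pos w i < match_pos w (up_pos w i)" using match_props(1)[OF d up_props(1,2)[OF d i]] .
  then have "Suc (cnt w (up_pos w i)) \<le> EP w i"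
    unfolding EP_def using less_pos_iff up_props(1,2)[OF d i] by blast
  then show "i \<le> EP w i" using up_props(3)[OF d i] i by simp
  show "EP w i \<le> N" unfolding EP_def by (rule cnt_le_N[OF d])
qed

lemma up_before_match_iff:
  assumes d: "dyck N w" and j: "1 \<le> j" "j \<le> N" and q: "q < length w" "\<not> w ! q"
  shows "up_pos w j < q \<longleftrightarrow> j \<le> cnt w q"
  using less_pos_iff[OF up_props(1,2)[OF d j]] up_props(3)[OF d j] j by simp

lemma up_after_match_iff:
  assumes d: "dyck N w" and j: "1 \<le> j" "j \<le> N" and q: "q < length w" "\<not> w ! q"
  shows "q < up_pos w j \<longleftrightarrow> cnt w q < j"
proof -
  have "up_pos w j \<noteq> q" using up_props(2)[OF d j] q by auto
  then show ?thesis using up_before_match_iff[OF assms] by auto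
qed

lemma dec_char:
  assumes d: "dyck N w"
  shows "dec N w = decE N (EP w)"
proof (intro set_eqI iffI; clarify)
  fix j i assume a: "(j, i) \<in> dec N w"
  then have ij: "i \<in> {1..N}" "j \<in> {1..N}" "j \<noteq> i" "up_pos w i < up_pos w j"
    "up_pos w j < match_pos w (up_pos w i)" unfolding dec_def by auto
  have "i < j" using up_mono_iff[OF d ij(1,2)] ij(4) by simp
  moreover have "j \<le> EP w i" unfolding EP_def
    using up_before_match_iff[OF d _ _ match_props(2,3)[OF d up_props(1,2)[OF d]]] ij by auto
  ultimately show "(j, i) \<in> decE N (EP w)" using ij unfolding decE_def by auto
next
  fix j i assume a: "(j, i) \<in> decE N (EP w)"
  then have ij: "i \<in> {1..N}" "i < j" "j \<le> EP w i" unfolding decE_def by auto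
  have jN: "j \<in> {1..N}" using ij EP_bounds[OF d, of i] by auto
  have "up_pos w i < up_pos w j" using up_mono_iff[OF d ij(1) jN] ij by simp
  moreover have "up_pos w j < match_pos w (up_pos w i)"
    using up_before_match_iff[OF d _ _ match_props(2,3)[OF d up_props(1,2)[OF d]]] ij jN
    unfolding EP_def by auto
  ultimately show "(j, i) \<in> dec N w" using ij jN unfolding dec_def by auto
qed

lemma noncross:
  assumes d: "dyck N w" and p: "p < length w" "w ! p" and q: "q < length w" "w ! q"
    and pq: "p < q" "q < match_pos w p"
  shows "match_pos w q < match_pos w p"
proof -
  have hq: "height w q > height w p" using match_props(5)[OF d p] pq by simp
  have "\<forall>k. p < k \<and> k \<le> Suc (match_pos w q) \<longrightarrow> height w k > height w p"
  proof (intro allI impI)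
    fix k assume k: "p < k \<and> k \<le> Suc (match_pos w q)"
    consider "k \<le> q" | "q < k \<and> k \<le> match_pos w q" | "k = Suc (match_pos w q)" using k by linarith
    then show "height w k > height w p"
    proof cases
      case 1 then show ?thesis using match_props(5)[OF d p] k pq by simp
    next
      case 2 then show ?thesis using match_props(5)[OF d q] hq by fastforce
    next
      case 3 then show ?thesis using match_props(4)[OF d q] hq by simp
    qed
  qed
  then have "Suc (match_pos w q) \<le> match_pos w p"
    using inside_iff[OF d p, of "Suc (match_pos w q)"] match_props(1)[OF d q] pq by simp
  then show ?thesis by simp
qed

lemma EP_valid:
  assumes d: "dyck N w"
  shows "validE N (EP w)"
  unfolding validE_def
proof (intro ballI conjI allI impI)
  fix i assume i: "i \<in> {1..N}"
  then show "i \<le> EP w i" "EP w i \<le> N" using EP_bounds[OF d] by auto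
  fix j assume j: "i < j \<and> j \<le> EP w i"
  then have jN: "j \<in> {1..N}" using i EP_bounds[OF d, of i] by auto
  have "(j, i) \<in> dec N w" using dec_char[OF d] i j unfolding decE_def by auto
  then have "up_pos w i < up_pos w j" "up_pos w j < match_pos w (up_pos w i)" unfolding dec_def by auto
  then have "match_pos w (up_pos w j) < match_pos w (up_pos w i)"
    using noncross[OF d up_props(1,2)[OF d] up_props(1,2)[OF d]] i jN by auto
  then show "EP w j \<le> EP w i" unfolding EP_def by (simp add: cnt_mono)
qed

lemma inc_base_char:
  assumes d: "dyck N w"
  shows "inc_base N w = incbE N (EP w)"
proof (intro set_eqI iffI; clarify)
  fix i k assume a: "(i, k) \<in> inc_base N w"
  then have ik: "i \<in> {1..N}" "k \<in> {1..N}" and lt: "match_pos w (up_pos w i) < up_pos w k"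
    and mn: "\<forall>l\<in>{1..N}. match_pos w (up_pos w i) < up_pos w l \<longrightarrow> up_pos w k \<le> up_pos w l"
    unfolding inc_base_def by auto
  note M = match_props(2,3)[OF d up_props(1,2)[OF d]]
  have k1: "EP w i < k" using up_after_match_iff[OF d _ _ M] ik lt unfolding EP_def by auto
  then have lt2: "EP w i < N" using ik by auto
  have sN: "Suc (EP w i) \<in> {1..N}" using lt2 by auto
  have "match_pos w (up_pos w i) < up_pos w (Suc (EP w i))"
    using up_after_match_iff[OF d _ _ M] ik sN unfolding EP_def by auto
  then have "up_pos w k \<le> up_pos w (Suc (EP w i))" using mn sN by auto
  then have "k \<le> Suc (EP w i)" using up_mono_iff[OF d sN ik(2)] by linarith
  then show "(i, k) \<in> incbE N (EP w)" using k1 lt2 ik unfolding incbE_def by auto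
next
  fix i k assume a: "(i, k) \<in> incbE N (EP w)"
  then have ik: "i \<in> {1..N}" "EP w i < N" "k = Suc (EP w i)" unfolding incbE_def by auto
  have kN: "k \<in> {1..N}" using ik by auto
  note M = match_props(2,3)[OF d up_props(1,2)[OF d]]
  have lt: "match_pos w (up_pos w i) < up_pos w k"
    using up_after_match_iff[OF d _ _ M] ik kN unfolding EP_def by auto
  have "up_pos w k \<le> up_pos w l" if l: "l \<in> {1..N}" "match_pos w (up_pos w i) < up_pos w l" for l
  proof -
    have "EP w i < l" using up_after_match_iff[OF d _ _ M] ik l unfolding EP_def by auto
    then have "k \<le> l" using ik by simp
    then show ?thesis using up_mono_iff[OF d l(1) kN] by linarith
  qed
  then show "(i, k) \<in> inc_base N w" using ik kN lt unfolding inc_base_def by auto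
qed


lemma validE_D:
  assumes "validE N E" "i \<in> {1..N}"
  shows "i \<le> E i" "E i \<le> N" "\<And>j. i < j \<Longrightarrow> j \<le> E i \<Longrightarrow> E j \<le> E i"
  using assms unfolding validE_def by auto

lemma inc_ord:
  assumes v: "validE N E" and "(i, k) \<in> incE N E"
  shows "i < k \<and> i \<in> {1..N} \<and> k \<in> {1..N}"
  using assms(2) unfolding incE_def
proof (induction rule: trancl_induct)
  case (base y)
  then have "i \<in> {1..N}" "E i < N" "y = Suc (E i)" unfolding incbE_def by auto
  then show ?case using validE_D(1)[OF v, of i] by auto
next
  case (step y z)
  then have "y \<in> {1..N}" "E y < N" "z = Suc (E y)" unfolding incbE_def by auto
  then show ?case using validE_D(1)[OF v, of y] step.IH by auto
qed

lemma inc_first: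
  assumes v: "validE N E" and "(i, k) \<in> incE N E"
  shows "Suc (E i) \<le> k"
proof -
  have "(i, k) \<in> (incbE N E)\<^sup>+" using assms(2) unfolding incE_def .
  then show ?thesis
  proof (rule converse_tranclE)
    assume "(i, k) \<in> incbE N E" then show ?thesis unfolding incbE_def by auto
  next
    fix y assume "(i, y) \<in> incbE N E" "(y, k) \<in> (incbE N E)\<^sup>+"
    moreover have "y < k" using inc_ord[OF v, of y k] calculation(2) unfolding incE_def by auto
    ultimately show ?thesis unfolding incbE_def by auto
  qed
qed

lemma span_reach:
  assumes v: "validE N E" and i: "i \<in> {1..N}" and lt: "E i < N"
  shows "i < b \<Longrightarrow> b \<le> E i \<Longrightarrow> (b, Suc (E i)) \<in> incE N E"
proof (induction "E i - b" arbitrary: b rule: less_induct)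
  case less
  have bN: "b \<in> {1..N}" using less.prems i validE_D(2)[OF v i] by auto
  have Eb: "E b \<le> E i" "b \<le> E b" using validE_D[OF v i] validE_D(1)[OF v bN] less.prems by auto
  show ?case
  proof (cases "E b = E i")
    case True
    then have "(b, Suc (E i)) \<in> incbE N E" using bN lt unfolding incbE_def by auto
    then show ?thesis unfolding incE_def by auto
  next
    case False
    define b' where "b' = Suc (E b)"
    have b': "i < b'" "b' \<le> E i" "E i - b' < E i - b" using Eb False less.prems unfolding b'_def by auto
    have "(b', Suc (E i)) \<in> incE N E" using less.hyps[OF b'(3) b'(1,2)] .
    moreover have "(b, b') \<in> incbE N E" using bN Eb False lt unfolding incbE_def b'_def by auto
    ultimately show ?thesis unfolding incE_def by (meson trancl_into_trancl2)
  qed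
qed

lemma inc_interval:
  assumes v: "validE N E" and ac: "(a, c) \<in> incE N E"
  shows "a < b \<Longrightarrow> b < c \<Longrightarrow> (b, c) \<in> incE N E"
proof -
  have "(a, c) \<in> (incbE N E)\<^sup>+" using ac unfolding incE_def .
  then have "\<forall>b. a < b \<and> b < c \<longrightarrow> (b, c) \<in> incE N E"
  proof (induction rule: converse_trancl_induct)
    case (base a)
    then have a: "a \<in> {1..N}" "E a < N" "c = Suc (E a)" unfolding incbE_def by auto
    show ?case using span_reach[OF v a(1,2)] a(3) by auto
  next
    case (step a y)
    then have a: "a \<in> {1..N}" "E a < N" "y = Suc (E a)" unfolding incbE_def by auto
    have yc: "(y, c) \<in> incE N E" using step(2) unfolding incE_def .
    show ?case
    proof (intro allI impI)
      fix b assume b: "a < b \<and> b < c"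
      consider "b < y" | "b = y" | "y < b" by linarith
      then show "(b, c) \<in> incE N E"
      proof cases
        case 1
        then have "(b, y) \<in> incE N E" using span_reach[OF v a(1,2), of b] a(3) b by auto
        then show ?thesis using yc unfolding incE_def by (meson trancl_trans)
      next
        case 2 then show ?thesis using yc by simp
      next
        case 3 then show ?thesis using step.IH b by auto
      qed
    qed
  qed
  then show "a < b \<Longrightarrow> b < c \<Longrightarrow> (b, c) \<in> incE N E" by auto
qed

lemma inc_hit:
  assumes v: "validE N E" and ab: "(a, b) \<in> incE N E"
  shows "a < c \<Longrightarrow> c < b \<Longrightarrow> b \<le> E c \<Longrightarrow> (a, c) \<in> incE N E"
proof -
  have "(a, b) \<in> (incbE N E)\<^sup>+" using ab unfolding incE_def .
  then have "\<forall>c. a < c \<and> c < b \<and> b \<le> E c \<longrightarrow> (a, c) \<in> incE N E"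
  proof (induction rule: trancl_induct)
    case (base b)
    then have a: "a \<in> {1..N}" "E a < N" "b = Suc (E a)" unfolding incbE_def by auto
    show ?case
    proof (intro allI impI)
      fix c assume c: "a < c \<and> c < b \<and> b \<le> E c"
      then have "E c \<le> E a" using validE_D(3)[OF v a(1)] a by auto
      then show "(a, c) \<in> incE N E" using c a by auto
    qed
  next
    case (step y b)
    then have y: "y \<in> {1..N}" "E y < N" "b = Suc (E y)" unfolding incbE_def by auto
    have ay: "(a, y) \<in> incE N E" using step(1) unfolding incE_def .
    show ?case
    proof (intro allI impI)
      fix c assume c: "a < c \<and> c < b \<and> b \<le> E c"
      consider "c < y" | "c = y" | "y < c" by linarith
      then show "(a, c) \<in> incE N E"
      proof cases
        case 1
        have "y < b" using inc_ord[OF v, of y b] step(2) unfolding incE_def by auto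
        then show ?thesis using step.IH c 1 by auto
      next
        case 2 then show ?thesis using ay by simp
      next
        case 3
        then have "E c \<le> E y" using validE_D(3)[OF v y(1)] c y by auto
        then show ?thesis using c y by auto
      qed
    qed
  qed
  then show "a < c \<Longrightarrow> c < b \<Longrightarrow> b \<le> E c \<Longrightarrow> (a, c) \<in> incE N E" by auto
qed

definition RE :: "nat \<Rightarrow> (nat \<Rightarrow> nat) \<Rightarrow> (nat \<Rightarrow> nat) \<Rightarrow> (nat \<times> nat) set" where
  "RE N E1 E2 = Id_on {1..N} \<union> (decE N E1 \<union> incE N E2)\<^sup>+"

lemma dec_ord: "(j, i) \<in> decE N E \<Longrightarrow> validE N E \<Longrightarrow> i < j \<and> i \<in> {1..N} \<and> j \<in> {1..N}"
  unfolding decE_def using validE_D(2) by fastforce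

locale twoE =
  fixes N :: nat and E1 E2 :: "nat \<Rightarrow> nat"
  assumes v1: "validE N E1" and v2: "validE N E2" and le12: "\<And>i. i \<in> {1..N} \<Longrightarrow> E1 i \<le> E2 i"
begin

abbreviation "S \<equiv> decE N E1 \<union> incE N E2"

lemma S_comp:
  assumes xy: "(x, y) \<in> S" and yz: "(y, z) \<in> S"
  shows "(x, z) \<in> S \<or> x = z"
proof -
  consider "(x, y) \<in> decE N E1" "(y, z) \<in> decE N E1" | "(x, y) \<in> incE N E2" "(y, z) \<in> incE N E2"
    | "(x, y) \<in> decE N E1" "(y, z) \<in> incE N E2" | "(x, y) \<in> incE N E2" "(y, z) \<in> decE N E1"
    using xy yz by blast
  then show ?thesis
  proof cases
    case 1
    then have a: "y < x" "x \<le> E1 y" "y \<in> {1..N}" "z < y" "y \<le> E1 z" "z \<in> {1..N}" unfolding decE_def by auto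
    then have "E1 y \<le> E1 z" using validE_D(3)[OF v1 a(6)] by auto
    then show ?thesis using a unfolding decE_def by auto
  next
    case 2 then show ?thesis unfolding incE_def by (meson UnI2 trancl_trans)
  next
    case 3
    then have a: "y < x" "x \<le> E1 y" "y \<in> {1..N}" unfolding decE_def by auto
    have "Suc (E2 y) \<le> z" using inc_first[OF v2] 3(2) by blast
    then have "x < z" using a le12[OF a(3)] by simp
    then show ?thesis using inc_interval[OF v2 3(2) a(1)] by auto
  next
    case 4
    then have a: "z < y" "y \<le> E1 z" "z \<in> {1..N}" unfolding decE_def by auto
    have xy': "x < y" "x \<in> {1..N}" using inc_ord[OF v2 4(1)] by auto
    consider "z = x" | "x < z" | "z < x" by linarith
    then show ?thesis
    proof cases
      case 1 then show ?thesis by simp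
    next
      case 2
      then show ?thesis using inc_hit[OF v2 4(1) 2 a(1)] a le12[OF a(3)] by auto
    next
      case 3
      then show ?thesis using a xy' unfolding decE_def by auto
    qed
  qed
qed

lemma S_sub: "(x, y) \<in> S \<Longrightarrow> x \<in> {1..N} \<and> y \<in> {1..N}"
  using dec_ord[OF _ v1] inc_ord[OF v2] by blast

lemma S_trancl: "(x, y) \<in> S\<^sup>+ \<Longrightarrow> (x, y) \<in> S \<or> (x = y \<and> x \<in> {1..N})"
proof (induction rule: trancl_induct)
  case (base y) then show ?case by simp
next
  case (step y z)
  show ?case
  proof (cases "x = y")
    case True then show ?thesis using step by auto
  next
    case False
    then have "(x, y) \<in> S" using step.IH by auto
    then have "(x, z) \<in> S \<or> x = z" using S_comp step.hyps(2) by blast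
    then show ?thesis using S_sub \<open>(x, y) \<in> S\<close> by blast
  qed
qed

lemma RE_eq: "RE N E1 E2 = Id_on {1..N} \<union> decE N E1 \<union> incE N E2"
proof -
  have "(decE N E1 \<union> incE N E2)\<^sup>+ \<subseteq> Id_on {1..N} \<union> decE N E1 \<union> incE N E2"
  proof
    fix z assume "z \<in> (decE N E1 \<union> incE N E2)\<^sup>+"
    then have "(fst z, snd z) \<in> S\<^sup>+" by simp
    then have "(fst z, snd z) \<in> S \<or> (fst z = snd z \<and> fst z \<in> {1..N})" by (rule S_trancl)
    then show "z \<in> Id_on {1..N} \<union> decE N E1 \<union> incE N E2" by (cases z) (auto simp: Id_on_def)
  qed
  then show ?thesis unfolding RE_def by auto
qed

lemma RE_interval_poset: "interval_poset N (RE N E1 E2)"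
  unfolding interval_poset_def RE_eq
proof (intro conjI)
  show "Id_on {1..N} \<union> decE N E1 \<union> incE N E2 \<subseteq> {1..N} \<times> {1..N}"
  proof
    fix z assume "z \<in> Id_on {1..N} \<union> decE N E1 \<union> incE N E2"
    then show "z \<in> {1..N} \<times> {1..N}" using S_sub[of "fst z" "snd z"] by (cases z) auto
  qed
  show "\<forall>x\<in>{1..N}. (x, x) \<in> Id_on {1..N} \<union> decE N E1 \<union> incE N E2" by auto
  show "trans (Id_on {1..N} \<union> decE N E1 \<union> incE N E2)"
  proof (rule transI)
    fix x y z assume a: "(x, y) \<in> Id_on {1..N} \<union> decE N E1 \<union> incE N E2"
      "(y, z) \<in> Id_on {1..N} \<union> decE N E1 \<union> incE N E2"
    show "(x, z) \<in> Id_on {1..N} \<union> decE N E1 \<union> incE N E2"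
    proof (cases "x = y \<or> y = z")
      case True then show ?thesis using a by auto
    next
      case False
      then have "(x, y) \<in> S" "(y, z) \<in> S" using a by auto
      then have "(x, z) \<in> S \<or> x = z" by (rule S_comp)
      moreover have "x \<in> {1..N}" using S_sub \<open>(x, y) \<in> S\<close> by blast
      ultimately show ?thesis by auto
    qed
  qed
  show "antisym (Id_on {1..N} \<union> decE N E1 \<union> incE N E2)"
  proof (rule antisymI)
    fix x y assume a: "(x, y) \<in> Id_on {1..N} \<union> decE N E1 \<union> incE N E2"
      "(y, x) \<in> Id_on {1..N} \<union> decE N E1 \<union> incE N E2"
    show "x = y"
    proof (rule ccontr)
      assume ne: "x \<noteq> y"
      have gen: False if "(u, v) \<in> incE N E2" "(v, u) \<in> decE N E1" for u v
      proof -
        have "Suc (E2 u) \<le> v" using inc_first[OF v2] that(1) by blast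
        moreover have "v \<le> E1 u" "u \<in> {1..N}" using that(2) unfolding decE_def by auto
        ultimately show False using le12 by fastforce
      qed
      consider "x < y" | "y < x" using ne by linarith
      then show False
      proof cases
        case 1
        have "(x, y) \<notin> decE N E1" using dec_ord[OF _ v1, of x y] 1 by auto
        moreover have "(y, x) \<notin> incE N E2" using inc_ord[OF v2, of y x] 1 by auto
        ultimately have "(x, y) \<in> incE N E2" "(y, x) \<in> decE N E1" using a ne by auto
        then show False using gen by blast
      next
        case 2
        have "(y, x) \<notin> decE N E1" using dec_ord[OF _ v1, of y x] 2 by auto
        moreover have "(x, y) \<notin> incE N E2" using inc_ord[OF v2, of x y] 2 by auto
        ultimately have "(y, x) \<in> incE N E2" "(x, y) \<in> decE N E1" using a ne by auto
        then show False using gen by blast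
      qed
    qed
  qed
  show "\<forall>a b c. 1 \<le> a \<and> a < b \<and> b < c \<and> c \<le> N \<longrightarrow>
    ((a, c) \<in> Id_on {1..N} \<union> decE N E1 \<union> incE N E2 \<longrightarrow> (b, c) \<in> Id_on {1..N} \<union> decE N E1 \<union> incE N E2) \<and>
    ((c, a) \<in> Id_on {1..N} \<union> decE N E1 \<union> incE N E2 \<longrightarrow> (b, a) \<in> Id_on {1..N} \<union> decE N E1 \<union> incE N E2)"
  proof (intro allI impI conjI)
    fix a b c assume abc: "1 \<le> a \<and> a < b \<and> b < c \<and> c \<le> N"
    {
      assume "(a, c) \<in> Id_on {1..N} \<union> decE N E1 \<union> incE N E2"
      moreover have "(a, c) \<notin> decE N E1" using dec_ord[OF _ v1, of a c] abc by auto
      ultimately have "(a, c) \<in> incE N E2" using abc by auto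
      then show "(b, c) \<in> Id_on {1..N} \<union> decE N E1 \<union> incE N E2" using inc_interval[OF v2] abc by auto
    }
    {
      assume "(c, a) \<in> Id_on {1..N} \<union> decE N E1 \<union> incE N E2"
      then have "(c, a) \<in> decE N E1" using abc inc_ord[OF v2] by fastforce
      then show "(b, a) \<in> Id_on {1..N} \<union> decE N E1 \<union> incE N E2" using abc unfolding decE_def by auto
    }
  qed
qed

lemma RE_dec_part: "{(x, y). (x, y) \<in> RE N E1 E2 \<and> y < x} = decE N E1"
  unfolding RE_eq using dec_ord[OF _ v1] inc_ord[OF v2] by fastforce

lemma RE_inc_part: "{(x, y). (x, y) \<in> RE N E1 E2 \<and> x < y} = incE N E2"
  unfolding RE_eq using dec_ord[OF _ v1] inc_ord[OF v2] by fastforce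

end

lemma dec_determines:
  assumes "validE N E" "validE N E'" "decE N E = decE N E'" "i \<in> {1..N}"
  shows "E i = E' i"
proof (rule ccontr)
  assume ne: "E i \<noteq> E' i"
  have b: "i \<le> E i" "E i \<le> N" "i \<le> E' i" "E' i \<le> N" using validE_D assms by auto
  consider "E i < E' i" | "E' i < E i" using ne by linarith
  then show False
  proof cases
    case 1
    then have "(E' i, i) \<in> decE N E'" using b assms(4) unfolding decE_def by auto
    then have "(E' i, i) \<in> decE N E" using assms(3) by simp
    then show False using 1 unfolding decE_def by auto
  next
    case 2
    then have "(E i, i) \<in> decE N E" using b assms(4) unfolding decE_def by auto
    then have "(E i, i) \<in> decE N E'" using assms(3) by simp
    then show False using 2 unfolding decE_def by auto
  qed
qed

lemma inc_determines:
  assumes "validE N E" "validE N E'" "incE N E = incE N E'" "i \<in> {1..N}"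
  shows "E i = E' i"
proof (rule ccontr)
  assume ne: "E i \<noteq> E' i"
  have b: "i \<le> E i" "E i \<le> N" "i \<le> E' i" "E' i \<le> N" using validE_D assms by auto
  consider "E i < E' i" | "E' i < E i" using ne by linarith
  then show False
  proof cases
    case 1
    then have "(i, Suc (E i)) \<in> incE N E" using b assms(4) unfolding incE_def incbE_def by auto
    then have "(i, Suc (E i)) \<in> incE N E'" using assms(3) by simp
    then show False using 1 inc_first[OF assms(2)] by fastforce
  next
    case 2
    then have "(i, Suc (E' i)) \<in> incE N E'" using b assms(4) unfolding incE_def incbE_def by auto
    then have "(i, Suc (E' i)) \<in> incE N E" using assms(3) by simp
    then show False using 2 inc_first[OF assms(1)] by fastforce
  qed
qed


lemma ip_to_E:
  assumes ip: "interval_poset N R"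
  shows "\<exists>E1 E2. validE N E1 \<and> validE N E2 \<and> (\<forall>i\<in>{1..N}. E1 i \<le> E2 i) \<and> R = RE N E1 E2"
proof -
  have sub: "R \<subseteq> {1..N} \<times> {1..N}" and rfl: "\<And>x. x \<in> {1..N} \<Longrightarrow> (x, x) \<in> R"
    and tr: "trans R" and asy: "antisym R"
    and iv1: "\<And>a b c. 1 \<le> a \<Longrightarrow> a < b \<Longrightarrow> b < c \<Longrightarrow> c \<le> N \<Longrightarrow> (a, c) \<in> R \<Longrightarrow> (b, c) \<in> R"
    and iv2: "\<And>a b c. 1 \<le> a \<Longrightarrow> a < b \<Longrightarrow> b < c \<Longrightarrow> c \<le> N \<Longrightarrow> (c, a) \<in> R \<Longrightarrow> (b, a) \<in> R"
    using ip unfolding interval_poset_def by blast+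
  define E1 where "E1 i = Max {j. j \<le> N \<and> i \<le> j \<and> (j, i) \<in> R}" for i
  define Pk where "Pk i k \<longleftrightarrow> i < k \<and> k \<le> N \<and> (i, k) \<in> R" for i k
  define E2 where "E2 i = (if \<exists>k. Pk i k then (LEAST k. Pk i k) - 1 else N)" for i
  have E1_in: "E1 i \<le> N \<and> i \<le> E1 i \<and> (E1 i, i) \<in> R" and E1_max: "\<And>j. j \<le> N \<Longrightarrow> i \<le> j \<Longrightarrow> (j, i) \<in> R \<Longrightarrow> j \<le> E1 i"
    if i: "i \<in> {1..N}" for i
  proof -
    have fin: "finite {j. j \<le> N \<and> i \<le> j \<and> (j, i) \<in> R}" by simp
    have ne: "i \<in> {j. j \<le> N \<and> i \<le> j \<and> (j, i) \<in> R}" using i rfl by auto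
    show "E1 i \<le> N \<and> i \<le> E1 i \<and> (E1 i, i) \<in> R" unfolding E1_def using Max_in[OF fin] ne by blast
    fix j assume "j \<le> N" "i \<le> j" "(j, i) \<in> R"
    then show "j \<le> E1 i" unfolding E1_def using Max_ge[OF fin] by blast
  qed
  have dec_eq: "decE N E1 = {(j, i). (j, i) \<in> R \<and> i < j}"
  proof (intro set_eqI iffI; clarify)
    fix j i assume "(j, i) \<in> decE N E1"
    then have ji: "i \<in> {1..N}" "i < j" "j \<le> E1 i" unfolding decE_def by auto
    show "(j, i) \<in> R \<and> i < j"
    proof (cases "j = E1 i")
      case True then show ?thesis using E1_in[OF ji(1)] ji by auto
    next
      case False
      then show ?thesis using iv2[of i j "E1 i"] ji E1_in[OF ji(1)] by auto
    qed
  next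
    fix j i assume "(j, i) \<in> R" "i < j"
    moreover then have "i \<in> {1..N}" "j \<in> {1..N}" using sub by auto
    ultimately show "(j, i) \<in> decE N E1" using E1_max unfolding decE_def by auto
  qed
  have E2_props: "i \<le> E2 i \<and> E2 i \<le> N \<and> ((\<exists>k. Pk i k) \<longrightarrow> E2 i < N) \<and> (E2 i < N \<longrightarrow> Pk i (Suc (E2 i)) \<and> (\<forall>k. Pk i k \<longrightarrow> Suc (E2 i) \<le> k))"
    if i: "i \<in> {1..N}" for i
  proof (cases "\<exists>k. Pk i k")
    case True
    define k0 where "k0 = (LEAST k. Pk i k)"
    have k0: "Pk i k0" unfolding k0_def using LeastI_ex[OF True] .
    have k0m: "\<And>k. Pk i k \<Longrightarrow> k0 \<le> k" unfolding k0_def by (rule Least_le)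
    have "E2 i = k0 - 1" unfolding E2_def k0_def using True by simp
    moreover have "i < k0" "k0 \<le> N" using k0 unfolding Pk_def by auto
    ultimately have s: "Suc (E2 i) = k0" "i \<le> E2 i" "E2 i \<le> N" by auto
    have "E2 i < N" using s(1) \<open>k0 \<le> N\<close> by simp
    then show ?thesis using s k0 k0m True by auto
  next
    case False
    then have "E2 i = N" unfolding E2_def by (rule if_not_P)
    then show ?thesis using i False by simp
  qed
  have inc_eq: "incE N E2 = {(i, k). (i, k) \<in> R \<and> i < k}"
  proof (intro set_eqI iffI; clarify)
    fix i k assume "(i, k) \<in> incE N E2"
    then have "(i, k) \<in> (incbE N E2)\<^sup>+" unfolding incE_def .
    then show "(i, k) \<in> R \<and> i < k"
    proof (induction rule: trancl_induct)
      case (base y)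
      then have "i \<in> {1..N}" "E2 i < N" "y = Suc (E2 i)" unfolding incbE_def by auto
      then show ?case using E2_props unfolding Pk_def by auto
    next
      case (step y z)
      then have "y \<in> {1..N}" "E2 y < N" "z = Suc (E2 y)" unfolding incbE_def by auto
      then have "(y, z) \<in> R" "y < z" using E2_props unfolding Pk_def by auto
      then show ?case using step.IH tr by (meson order.strict_trans transD)
    qed
  next
    fix i k assume ik: "(i, k) \<in> R" "i < k"
    then show "(i, k) \<in> incE N E2"
    proof (induction "k - i" arbitrary: i rule: less_induct)
      case less
      have iN: "i \<in> {1..N}" "k \<le> N" using less.prems sub by auto
      have Pik: "Pk i k" unfolding Pk_def using less.prems iN by auto
      have E2: "E2 i < N" "Pk i (Suc (E2 i))" "Suc (E2 i) \<le> k" using E2_props[OF iN(1)] Pik unfolding Pk_def by auto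
      have step: "(i, Suc (E2 i)) \<in> incbE N E2" using iN E2 unfolding incbE_def by auto
      show ?case
      proof (cases "Suc (E2 i) = k")
        case True then show ?thesis using step unfolding incE_def by auto
      next
        case False
        define k0 where "k0 = Suc (E2 i)"
        have "i < k0" "k0 < k" using E2 False unfolding Pk_def k0_def by auto
        then have "(k0, k) \<in> R" using iv1[of i k0 k] less.prems iN by auto
        then have "(k0, k) \<in> incE N E2" using less.hyps[of k0] \<open>i < k0\<close> \<open>k0 < k\<close> by auto
        then show ?thesis using step unfolding incE_def k0_def by (meson trancl_into_trancl2)
      qed
    qed
  qed
  have v1: "validE N E1" unfolding validE_def
  proof (intro ballI conjI allI impI)
    fix i assume i: "i \<in> {1..N}"
    then show "i \<le> E1 i" "E1 i \<le> N" using E1_in by auto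
    fix j assume j: "i < j \<and> j \<le> E1 i"
    then have "(j, i) \<in> decE N E1" using i unfolding decE_def by auto
    then have ji: "(j, i) \<in> R" using dec_eq by auto
    have jN: "j \<in> {1..N}" using j i E1_in[OF i] by auto
    have "(E1 j, i) \<in> R" using E1_in[OF jN] ji tr by (meson transD)
    then show "E1 j \<le> E1 i" using E1_max[OF i] E1_in[OF jN] j by auto
  qed
  have v2: "validE N E2" unfolding validE_def
  proof (intro ballI conjI allI impI)
    fix i assume i: "i \<in> {1..N}"
    then show "i \<le> E2 i" "E2 i \<le> N" using E2_props by auto
    fix j assume j: "i < j \<and> j \<le> E2 i"
    have jN: "j \<in> {1..N}" using j i E2_props[OF i] by auto
    show "E2 j \<le> E2 i"
    proof (cases "E2 i < N")
      case True
      then have P: "Pk i (Suc (E2 i))" using E2_props[OF i] by auto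
      then have "(j, Suc (E2 i)) \<in> R" using iv1[of i j "Suc (E2 i)"] i j unfolding Pk_def by auto
      then have "Pk j (Suc (E2 i))" using j P unfolding Pk_def by auto
      then show ?thesis using E2_props[OF jN] by (cases "E2 j < N") auto
    next
      case False then show ?thesis using E2_props[OF jN] by auto
    qed
  qed
  have le: "\<forall>i\<in>{1..N}. E1 i \<le> E2 i"
  proof
    fix i assume i: "i \<in> {1..N}"
    show "E1 i \<le> E2 i"
    proof (rule ccontr)
      assume "\<not> E1 i \<le> E2 i"
      then have lt: "E2 i < E1 i" by simp
      then have "E2 i < N" using E1_in[OF i] by auto
      then have P: "Pk i (Suc (E2 i))" using E2_props[OF i] by auto
      have "(Suc (E2 i), i) \<in> decE N E1" using lt i P unfolding decE_def Pk_def by auto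
      then have "(Suc (E2 i), i) \<in> R" using dec_eq by auto
      moreover have "(i, Suc (E2 i)) \<in> R" using P unfolding Pk_def by auto
      ultimately show False using asy P unfolding Pk_def by (metis antisymD less_irrefl)
    qed
  qed
  interpret twoE N E1 E2 using v1 v2 le by unfold_locales auto
  have "R = Id_on {1..N} \<union> decE N E1 \<union> incE N E2"
  proof (intro set_eqI iffI)
    fix z assume z: "z \<in> R"
    obtain x y where xy: "z = (x, y)" by (cases z)
    have "x \<in> {1..N}" using z sub xy by auto
    then show "z \<in> Id_on {1..N} \<union> decE N E1 \<union> incE N E2"
      using z xy dec_eq inc_eq by (cases x y rule: linorder_cases) auto
  next
    fix z assume "z \<in> Id_on {1..N} \<union> decE N E1 \<union> incE N E2"
    then show "z \<in> R" using dec_eq inc_eq rfl by (auto simp: Id_on_def)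
  qed
  then have "R = RE N E1 E2" using RE_eq by simp
  then show ?thesis using v1 v2 le by blast
qed


lemma cnt_app1: "k \<le> length u \<Longrightarrow> cnt (u @ v) k = cnt u k"
  by (simp add: cnt_def)
lemma cnt_app2: "cnt (u @ v) (length u + r) = count_list u True + cnt v r"
  by (simp add: cnt_def)
lemma height_app1: "k \<le> length u \<Longrightarrow> height (u @ v) k = height u k"
  by (simp add: height_def)
lemma height_app2: "height (u @ v) (length u + r) = height u (length u) + height v r"
  by (simp add: height_def)

lemma matched_up:
  assumes d: "dyck N w" and a: "a < length w" "\<not> w ! a"
  shows "\<exists>p<a. w ! p \<and> match_pos w p = a"
proof -
  have ha1: "height w (Suc a) = height w a - 1" using height_Suc[OF a(1)] a(2) by simp
  have "height w (Suc a) \<ge> 0" using dyck_nonneg[OF d] a by simp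
  then have ha: "height w a \<ge> 1" using ha1 by simp
  define S where "S = {p. p \<le> a \<and> height w p < height w a}"
  have fin: "finite S" unfolding S_def by simp
  have ne: "0 \<in> S" unfolding S_def using ha by simp
  define p0 where "p0 = Max S"
  have p0S: "p0 \<in> S" unfolding p0_def using Max_in[OF fin] ne by blast
  have p0a: "p0 < a" using p0S unfolding S_def by (cases "p0 = a") auto
  have above: "height w k \<ge> height w a" if "p0 < k" "k \<le> a" for k
  proof (rule ccontr)
    assume "\<not> height w k \<ge> height w a"
    then have "k \<in> S" unfolding S_def using that by simp
    then have "k \<le> p0" unfolding p0_def using Max_ge[OF fin] by blast
    then show False using that by simp
  qed
  have p0l: "p0 < length w" using p0a a by simp
  have h1: "height w (Suc p0) \<ge> height w a" using above[of "Suc p0"] p0a by simp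
  have h0: "height w p0 < height w a" using p0S unfolding S_def by simp
  have wp: "w ! p0" and hp: "height w p0 = height w a - 1"
    using height_Suc[OF p0l] h1 h0 by (auto split: if_splits)
  have ins: "\<forall>k. p0 < k \<and> k \<le> a \<longrightarrow> height w k > height w p0" using above hp by force
  have "a \<le> match_pos w p0" using inside_iff[OF d p0l wp p0a] ins by simp
  moreover have "\<not> Suc a \<le> match_pos w p0"
  proof
    assume "Suc a \<le> match_pos w p0"
    then have "height w (Suc a) > height w p0" using match_props(5)[OF d p0l wp] p0a by simp
    then show False using ha1 hp by simp
  qed
  ultimately show ?thesis using p0a wp by auto
qed

lemma dec_inside:
  assumes d: "dyck N w"
  shows "(j, i) \<in> dec N w \<longleftrightarrow> i \<in> {1..N} \<and> j \<in> {1..N} \<and> i < j \<and>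
    (\<forall>k. up_pos w i < k \<and> k \<le> up_pos w j \<longrightarrow> height w k > height w (up_pos w i))"
proof
  assume "(j, i) \<in> dec N w"
  then have ij: "i \<in> {1..N}" "j \<in> {1..N}" "up_pos w i < up_pos w j"
    "up_pos w j < match_pos w (up_pos w i)" unfolding dec_def by auto
  have "i < j" using up_mono_iff[OF d ij(1,2)] ij(3) by simp
  moreover have "\<forall>k. up_pos w i < k \<and> k \<le> up_pos w j \<longrightarrow> height w k > height w (up_pos w i)"
    using match_props(5)[OF d up_props(1,2)[OF d]] ij by auto
  ultimately show "i \<in> {1..N} \<and> j \<in> {1..N} \<and> i < j \<and>
    (\<forall>k. up_pos w i < k \<and> k \<le> up_pos w j \<longrightarrow> height w k > height w (up_pos w i))" using ij by simp
next
  assume r: "i \<in> {1..N} \<and> j \<in> {1..N} \<and> i < j \<and>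
    (\<forall>k. up_pos w i < k \<and> k \<le> up_pos w j \<longrightarrow> height w k > height w (up_pos w i))"
  then have ij: "i \<in> {1..N}" "j \<in> {1..N}" "i < j" by auto
  have lt: "up_pos w i < up_pos w j" using up_mono_iff[OF d ij(1,2)] ij(3) by simp
  have le: "up_pos w j \<le> match_pos w (up_pos w i)"
    using inside_iff[OF d up_props(1,2)[OF d] lt] r ij by auto
  have "up_pos w j \<noteq> match_pos w (up_pos w i)"
    using up_props(2)[OF d, of j] match_props(3)[OF d up_props(1,2)[OF d, of i]] ij by auto
  then show "(j, i) \<in> dec N w" unfolding dec_def using ij lt le by auto
qed

lemma row_eq:
  assumes "i \<le> (e::nat)" "i \<le> c" "\<And>j. (i < j \<and> j \<le> e) \<longleftrightarrow> (i < j \<and> j \<le> c)"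
  shows "e = c"
proof (rule ccontr)
  assume "e \<noteq> c"
  then consider "e < c" | "c < e" by linarith
  then show False
  proof cases
    case 1 then show False using assms(3)[of c] assms(1) by simp
  next
    case 2 then show False using assms(3)[of e] assms(2) by simp
  qed
qed


lemma nth_height: "k < length w \<Longrightarrow> w ! k \<longleftrightarrow> height w k < height w (Suc k)"
  using height_Suc[of k w] by auto

lemma cnt_height: "k \<le> length w \<Longrightarrow> 2 * int (cnt w k) = height w k + int k"
  using height_cnt[of k w] cnt_le[of w k] by simp

lemma match_inj:
  assumes d: "dyck N w" and p: "p < length w" "w ! p" and q: "q < length w" "w ! q"
    and eq: "match_pos w p = match_pos w q"
  shows "p = q"
proof (rule ccontr)
  assume "p \<noteq> q"
  then consider "p < q" | "q < p" by linarith
  then show False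
  proof cases
    case 1
    have "q < match_pos w p"
      using eq match_props(1)[OF d q] by simp
    then show False using noncross[OF d p q 1] eq by simp
  next
    case 2
    have "p < match_pos w q"
      using eq match_props(1)[OF d p] by simp
    then show False using noncross[OF d q p 2] eq by simp
  qed
qed

definition ins :: "bool list \<Rightarrow> nat \<Rightarrow> nat \<Rightarrow> bool" where
  "ins w p q \<longleftrightarrow> (\<forall>k. p < k \<and> k \<le> q \<longrightarrow> height w p < height w k)"

locale rot =
  fixes N :: nat and P xs W zs :: "bool list"
  assumes d: "dyck N P" and Peq: "P = xs @ [False] @ W @ zs" and bW: "balanced W"
begin

definition "P' = xs @ W @ [False] @ zs"
definition "a = length xs"
definition "L = length W"

lemma lenP: "length P = a + 1 + L + length zs" unfolding Peq a_def L_def by simp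
lemma lenP': "length P' = length P" unfolding P'_def Peq by simp

lemma hW: "r \<le> L \<Longrightarrow> height W r \<ge> 0" "height W L = 0"
proof -
  have dW: "dyck (L div 2) W" using bW unfolding balanced_def L_def by simp
  show "r \<le> L \<Longrightarrow> height W r \<ge> 0" using dyck_nonneg[OF dW] unfolding L_def by simp
  show "height W L = 0" using dyck_end[OF dW] unfolding L_def by simp
qed

lemma hP_lo: "k \<le> a \<Longrightarrow> height P k = height xs k"
  unfolding Peq a_def by (simp add: height_app1)
lemma hP'_lo: "k \<le> a \<Longrightarrow> height P' k = height xs k"
  unfolding P'_def a_def by (simp add: height_app1)

lemma hP_mid: "r \<le> L \<Longrightarrow> height P (a + 1 + r) = height xs a - 1 + height W r"
proof -
  assume r: "r \<le> L"
  have "height P (a + (1 + r)) = height xs a + height ([False] @ W @ zs) (1 + r)"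
    unfolding Peq a_def by (rule height_app2)
  also have "height ([False] @ W @ zs) (1 + r) = height [False] 1 + height (W @ zs) r"
    using height_app2[of "[False]" "W @ zs" r] by simp
  also have "height (W @ zs) r = height W r" using r unfolding L_def by (simp add: height_app1)
  finally show ?thesis by (simp add: height_def)
qed

lemma hP_hi: "height P (a + 1 + L + r) = height xs a - 1 + height zs r"
proof -
  have e1: "height P (a + (1 + (L + r))) = height xs a + height ([False] @ W @ zs) (1 + (L + r))"
    unfolding Peq a_def by (rule height_app2)
  have e2: "height ([False] @ (W @ zs)) (1 + (L + r)) = height [False] 1 + height (W @ zs) (L + r)"
    using height_app2[of "[False]" "W @ zs" "L + r"] by simp
  have e3: "height (W @ zs) (L + r) = height W L + height zs r" unfolding L_def by (rule height_app2)
  have hF: "height [False] 1 = -1" by (simp add: height_def)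
  have "a + 1 + L + r = a + (1 + (L + r))" by simp
  then have "height P (a + 1 + L + r) = height P (a + (1 + (L + r)))" by (simp only:)
  then show ?thesis using e1 e2 e3 hW(2) hF by simp
qed

lemma hP'_mid: "r \<le> L \<Longrightarrow> height P' (a + r) = height xs a + height W r"
proof -
  assume r: "r \<le> L"
  have "height P' (a + r) = height xs a + height (W @ [False] @ zs) r"
    unfolding P'_def a_def by (rule height_app2)
  also have "height (W @ [False] @ zs) r = height W r" using r unfolding L_def by (simp add: height_app1)
  finally show ?thesis .
qed

lemma hP'_hi: "height P' (a + 1 + L + r) = height xs a - 1 + height zs r"
proof -
  have e1: "height P' (a + (L + (1 + r))) = height xs a + height (W @ [False] @ zs) (L + (1 + r))"
    unfolding P'_def a_def by (rule height_app2)
  have e2: "height (W @ ([False] @ zs)) (L + (1 + r)) = height W L + height ([False] @ zs) (1 + r)"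
    unfolding L_def by (rule height_app2)
  have e3: "height ([False] @ zs) (1 + r) = height [False] 1 + height zs r"
    using height_app2[of "[False]" zs r] by simp
  have hF: "height [False] 1 = -1" by (simp add: height_def)
  have "a + 1 + L + r = a + (L + (1 + r))" by simp
  then have "height P' (a + 1 + L + r) = height P' (a + (L + (1 + r)))" by (simp only:)
  then show ?thesis using e1 e2 e3 hW(2) hF by simp
qed

lemma h_same: "k \<le> a \<or> a + 1 + L \<le> k \<Longrightarrow> height P' k = height P k"
proof -
  assume "k \<le> a \<or> a + 1 + L \<le> k"
  then show ?thesis
  proof
    assume "k \<le> a" then show ?thesis using hP_lo hP'_lo by simp
  next
    assume "a + 1 + L \<le> k"
    then obtain r where "k = a + 1 + L + r" by (metis le_add_diff_inverse)
    then show ?thesis using hP_hi hP'_hi by simp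
  qed
qed

lemma h_mid: "a \<le> k \<Longrightarrow> k \<le> a + L \<Longrightarrow> height P' k = height P (Suc k) + 1"
proof -
  assume k: "a \<le> k" "k \<le> a + L"
  then obtain r where r: "k = a + r" "r \<le> L" by (metis le_add_diff_inverse nat_add_left_cancel_le)
  then show ?thesis using hP'_mid[OF r(2)] hP_mid[OF r(2)] by simp
qed

lemma h_W_ge: "a + 1 \<le> k \<Longrightarrow> k \<le> a + 1 + L \<Longrightarrow> height P k \<ge> height P a - 1"
proof -
  assume k: "a + 1 \<le> k" "k \<le> a + 1 + L"
  then obtain r where r: "k = a + 1 + r" "r \<le> L" by (metis le_add_diff_inverse nat_add_left_cancel_le)
  then show ?thesis using hP_mid[OF r(2)] hW(1)[OF r(2)] hP_lo[of a] by simp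
qed

lemma h_a1: "height P (a + 1) = height P a - 1"
  using hP_mid[of 0] hP_lo[of a] by (simp add: height_def)

lemma h_aL1: "height P (a + 1 + L) = height P a - 1"
  using hP_mid[of L] hW(2) hP_lo[of a] by simp

lemma Pa: "\<not> P ! a" "a < length P" unfolding Peq a_def by auto

lemma dP': "dyck N P'"
  unfolding dyck_def
proof (intro conjI allI impI)
  show "length P' = 2 * N" using lenP' dyck_len[OF d] by simp
  show "count_list P' True = N" using dyck_cnt[OF d] unfolding Peq P'_def by simp
  fix k assume k: "k \<le> length P'"
  show "0 \<le> height P' k"
  proof (cases "k \<le> a \<or> a + 1 + L \<le> k")
    case True then show ?thesis using h_same dyck_nonneg[OF d] k lenP' by simp
  next
    case False
    then have "height P' k = height P (Suc k) + 1" using h_mid by simp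
    moreover have "Suc k \<le> length P" using False lenP by simp
    ultimately show ?thesis using dyck_nonneg[OF d] by fastforce
  qed
qed

definition phi :: "nat \<Rightarrow> nat" where
  "phi p = (if p < a then p else if p \<le> a + L then p - 1 else p)"

lemma phi_props:
  assumes p: "p < length P" "P ! p"
  shows "phi p < length P'" "P' ! phi p" "cnt P' (phi p) = cnt P p"
proof -
  have pa: "p \<noteq> a" using p Pa by auto
  have c: "cnt P' (phi p) = cnt P p \<and> height P' (Suc (phi p)) - height P' (phi p) = height P (Suc p) - height P p"
  proof (cases "p < a \<or> a + L < p")
    case True
    then have ph: "phi p = p" unfolding phi_def by auto
    have "height P' p = height P p" "height P' (Suc p) = height P (Suc p)" using h_same True by auto
    moreover have "2 * int (cnt P' p) = 2 * int (cnt P p)"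
      using cnt_height[of p P] cnt_height[of p P'] p lenP' calculation by simp
    ultimately show ?thesis using ph by simp
  next
    case False
    then have r: "a < p" "p \<le> a + L" using pa by auto
    then have ph: "phi p = p - 1" unfolding phi_def by auto
    have e1: "height P' (p - 1) = height P p + 1" using h_mid[of "p - 1"] r by simp
    have e2: "height P' p = height P (Suc p) + 1" using h_mid[of p] r by simp
    have "2 * int (cnt P' (p - 1)) = height P' (p - 1) + int (p - 1)"
      using cnt_height[of "p - 1" P'] p lenP' by simp
    also have "\<dots> = height P p + int p" using e1 r by simp
    also have "\<dots> = 2 * int (cnt P p)" using cnt_height[of p P] p by simp
    finally show ?thesis using ph e1 e2 r by simp
  qed
  show "phi p < length P'" using p lenP' unfolding phi_def by auto
  then show "P' ! phi p" using nth_height[of "phi p" P'] nth_height[of p P] p c by simp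
  show "cnt P' (phi p) = cnt P p" using c by simp
qed

lemma up_P': "i \<in> {1..N} \<Longrightarrow> up_pos P' i = phi (up_pos P i)"
proof -
  assume i: "i \<in> {1..N}"
  have u: "up_pos P i < length P" "P ! up_pos P i" "cnt P (up_pos P i) = i - 1" using up_props[OF d] i by auto
  have "up_pos P' (Suc (cnt P' (phi (up_pos P i)))) = phi (up_pos P i)"
    using up_pos_char phi_props[OF u(1,2)] by blast
  then show ?thesis using phi_props(3)[OF u(1,2)] u(3) i by simp
qed

end


context rot begin

definition "p0 = (SOME p. p < a \<and> P ! p \<and> match_pos P p = a)"

lemma p0_props: "p0 < a" "P ! p0" "match_pos P p0 = a"
proof -
  have "\<exists>p. p < a \<and> P ! p \<and> match_pos P p = a" using matched_up[OF d Pa(2,1)] by blast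
  then have "p0 < a \<and> P ! p0 \<and> match_pos P p0 = a" unfolding p0_def by (rule someI_ex)
  then show "p0 < a" "P ! p0" "match_pos P p0 = a" by auto
qed

lemma p0l: "p0 < length P" using p0_props(1) Pa(2) by simp

lemma p0_ins: "p0 < k \<Longrightarrow> k \<le> a \<Longrightarrow> height P k > height P p0"
  using match_props(5)[OF d p0l p0_props(2)] p0_props(3) by simp

lemma p0_h: "height P (a + 1) = height P p0"
  using match_props(4)[OF d p0l p0_props(2)] p0_props(3) by simp

lemma ins_AA:
  assumes "p < q" "q \<le> a"
  shows "ins P' p q \<longleftrightarrow> ins P p q"
  unfolding ins_def using h_same assms by auto

lemma ins_AB_fwd:
  assumes pq: "p < a" "a < q" "q \<le> a + L" and pP: "P ! p" and i: "ins P' p (q - 1)"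
  shows "ins P p q \<or> p = p0"
proof (cases "p = p0")
  case True then show ?thesis by simp
next
  case False
  have pl: "p < length P" using pq Pa by simp
  have lo: "height P k > height P p" if "p < k" "k \<le> a" for k
    using i that pq h_same[of k] h_same[of p] unfolding ins_def by auto
  have "height P (a + 1) \<noteq> height P p"
  proof
    assume eq: "height P (a + 1) = height P p"
    have "a \<le> match_pos P p" using inside_iff[OF d pl pP pq(1)] lo by auto
    moreover have "\<not> a + 1 \<le> match_pos P p"
    proof
      assume "a + 1 \<le> match_pos P p"
      then have "height P (a + 1) > height P p" using match_props(5)[OF d pl pP, of "a + 1"] pq by simp
      then show False using eq by simp
    qed
    ultimately have "match_pos P p = a" by simp
    then show False using match_inj[OF d pl pP p0l p0_props(2)] p0_props(3) False by simp
  qed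
  moreover have "height P a > height P p" using lo pq by simp
  ultimately have gt: "height P a - 1 > height P p" using h_a1 by simp
  have "height P k > height P p" if "p < k" "k \<le> q" for k
  proof (cases "k \<le> a")
    case True then show ?thesis using lo that by simp
  next
    case False
    then show ?thesis using h_W_ge[of k] gt that pq by fastforce
  qed
  then show ?thesis unfolding ins_def by simp
qed

lemma ins_AB_bwd:
  assumes pq: "p < a" "a < q" "q \<le> a + L" and i: "ins P p q \<or> p = p0"
  shows "ins P' p (q - 1)"
  unfolding ins_def
proof (intro allI impI)
  fix k assume k: "p < k \<and> k \<le> q - 1"
  have hp: "height P' p = height P p" using h_same pq by simp
  show "height P' p < height P' k"
  proof (cases "k \<le> a")
    case True
    then have "height P' k = height P k" using h_same by simp
    moreover have "height P k > height P p" using i k True pq p0_ins unfolding ins_def by auto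
    ultimately show ?thesis using hp by simp
  next
    case False
    then have hk: "height P' k = height P (Suc k) + 1" using h_mid k pq by simp
    show ?thesis using i
    proof
      assume "ins P p q"
      then have "height P (Suc k) > height P p" using k pq unfolding ins_def by auto
      then show ?thesis using hk hp by simp
    next
      assume p: "p = p0"
      have "height P (Suc k) \<ge> height P a - 1" using h_W_ge[of "Suc k"] False k pq by simp
      moreover have "height P a > height P p0" using p0_ins[of a] p0_props(1) by simp
      ultimately show ?thesis using hk hp p by simp
    qed
  qed
qed

lemma ins_AC:
  assumes pq: "p < a" "a + L < q"
  shows "ins P' p q \<longleftrightarrow> ins P p q"
proof
  assume i: "ins P' p q"
  have hp: "height P' p = height P p" using h_same pq by simp
  have "height P' p < height P' (a + 1 + L)" using i pq unfolding ins_def by simp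
  then have "height P (a + 1 + L) > height P p"
    using h_same[of "a + 1 + L"] hp by simp
  then have g: "height P a - 1 > height P p" using h_aL1 by simp
  show "ins P p q" unfolding ins_def
  proof (intro allI impI)
    fix k assume k: "p < k \<and> k \<le> q"
    show "height P p < height P k"
    proof (cases "k \<le> a \<or> a + 1 + L \<le> k")
      case True then show ?thesis using i k h_same[of k] hp unfolding ins_def by auto
    next
      case False then show ?thesis using h_W_ge[of k] g by simp
    qed
  qed
next
  assume i: "ins P p q"
  have hp: "height P' p = height P p" using h_same pq by simp
  show "ins P' p q" unfolding ins_def
  proof (intro allI impI)
    fix k assume k: "p < k \<and> k \<le> q"
    show "height P' p < height P' k"
    proof (cases "k \<le> a \<or> a + 1 + L \<le> k")
      case True then show ?thesis using i k h_same[of k] hp unfolding ins_def by auto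
    next
      case False
      then have "height P' k = height P (Suc k) + 1" using h_mid by simp
      moreover have "height P (Suc k) > height P p" using i k pq False unfolding ins_def by auto
      ultimately show ?thesis using hp by simp
    qed
  qed
qed

lemma ins_BB:
  assumes pq: "a < p" "p < q" "q \<le> a + L"
  shows "ins P' (p - 1) (q - 1) \<longleftrightarrow> ins P p q"
proof -
  have hp: "height P' (p - 1) = height P p + 1" using h_mid[of "p - 1"] pq by simp
  have hk: "height P' k = height P (Suc k) + 1" if "p - 1 < k" "k \<le> q - 1" for k
    using h_mid[of k] that pq by simp
  show ?thesis unfolding ins_def
  proof
    assume i: "\<forall>k. p - 1 < k \<and> k \<le> q - 1 \<longrightarrow> height P' (p - 1) < height P' k"
    show "\<forall>k. p < k \<and> k \<le> q \<longrightarrow> height P p < height P k"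
    proof (intro allI impI)
      fix k assume k: "p < k \<and> k \<le> q"
      have kk: "p - 1 < k - 1" "k - 1 \<le> q - 1" using k pq by auto
      then have "height P' (p - 1) < height P' (k - 1)" using i by blast
      moreover have "height P' (k - 1) = height P k + 1" using hk[OF kk] k by simp
      ultimately show "height P p < height P k" using hp by simp
    qed
  next
    assume i: "\<forall>k. p < k \<and> k \<le> q \<longrightarrow> height P p < height P k"
    show "\<forall>k. p - 1 < k \<and> k \<le> q - 1 \<longrightarrow> height P' (p - 1) < height P' k"
    proof (intro allI impI)
      fix k assume k: "p - 1 < k \<and> k \<le> q - 1"
      then have "p < Suc k \<and> Suc k \<le> q" using pq by auto
      then have "height P p < height P (Suc k)" using i by blast
      then show "height P' (p - 1) < height P' k" using hp hk[of k] k by simp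
    qed
  qed
qed

lemma ins_BC:
  assumes pq: "a < p" "p \<le> a + L" "a + L < q"
  shows "\<not> ins P' (p - 1) q" "\<not> ins P p q"
proof -
  have hpge: "height P p \<ge> height P a - 1" using h_W_ge[of p] pq by simp
  show "\<not> ins P p q"
  proof
    assume "ins P p q"
    then have "height P p < height P (a + 1 + L)" using pq unfolding ins_def by simp
    then show False using h_aL1 hpge by simp
  qed
  have e1: "height P' (a + L) = height P a" using h_mid[of "a + L"] h_aL1 by simp
  have e2: "height P' (p - 1) = height P p + 1" using h_mid[of "p - 1"] pq by simp
  show "\<not> ins P' (p - 1) q"
  proof
    assume "ins P' (p - 1) q"
    then have "height P' (p - 1) < height P' (a + L)" using pq unfolding ins_def by simp
    then show False using e1 e2 hpge by simp
  qed
qed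

lemma ins_CC:
  assumes pq: "a + L < p" "p < q"
  shows "ins P' p q \<longleftrightarrow> ins P p q"
  unfolding ins_def using h_same assms by auto

end


context rot begin

lemma ins_main:
  assumes p: "p < length P" "P ! p" and q: "q < length P" "P ! q" and pq: "p < q"
  shows "ins P' (phi p) (phi q) \<longleftrightarrow> ins P p q \<or> (p = p0 \<and> a < q \<and> q \<le> a + L)"
proof -
  have pa: "p \<noteq> a" "q \<noteq> a" using p q Pa by auto
  consider "p < a" | "a < p \<and> p \<le> a + L" | "a + L < p" using pa by linarith
  then show ?thesis
  proof cases
    case 1
    consider "q < a" | "a < q \<and> q \<le> a + L" | "a + L < q" using pa by linarith
    then show ?thesis
    proof cases
      case 1
      then show ?thesis using ins_AA[of p q] pq \<open>p < a\<close> unfolding phi_def by auto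
    next
      case 2
      have ph: "phi p = p" "phi q = q - 1" using \<open>p < a\<close> 2 unfolding phi_def by auto
      show ?thesis using ins_AB_fwd[OF \<open>p < a\<close> _ _ p(2)] ins_AB_bwd[OF \<open>p < a\<close>] 2 ph by auto
    next
      case 3
      have ph: "phi p = p" "phi q = q" using \<open>p < a\<close> 3 unfolding phi_def by auto
      show ?thesis using ins_AC[OF \<open>p < a\<close> 3] 3 ph by auto
    qed
  next
    case 2
    have pp0: "p \<noteq> p0" using 2 p0_props(1) by auto
    show ?thesis
    proof (cases "q \<le> a + L")
      case True
      have ph: "phi p = p - 1" "phi q = q - 1" using 2 True pq unfolding phi_def by auto
      show ?thesis using ins_BB[of p q] 2 True pq ph pp0 by auto
    next
      case False
      have ph: "phi p = p - 1" "phi q = q" using 2 False pq unfolding phi_def by auto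
      show ?thesis using ins_BC[of p q] 2 False ph by auto
    qed
  next
    case 3
    have ph: "phi p = p" "phi q = q" using 3 pq unfolding phi_def by auto
    show ?thesis using ins_CC[OF 3 pq] ph 3 p0_props(1) by auto
  qed
qed

lemma dec_rot:
  "(j, i) \<in> dec N P' \<longleftrightarrow> (j, i) \<in> dec N P \<or>
     (i \<in> {1..N} \<and> j \<in> {1..N} \<and> i < j \<and> up_pos P i = p0 \<and> a < up_pos P j \<and> up_pos P j \<le> a + L)"
proof -
  have "(j, i) \<in> dec N P' \<longleftrightarrow> i \<in> {1..N} \<and> j \<in> {1..N} \<and> i < j \<and> ins P' (up_pos P' i) (up_pos P' j)"
    using dec_inside[OF dP'] unfolding ins_def by simp
  also have "\<dots> \<longleftrightarrow> i \<in> {1..N} \<and> j \<in> {1..N} \<and> i < j \<and>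
     (ins P (up_pos P i) (up_pos P j) \<or> (up_pos P i = p0 \<and> a < up_pos P j \<and> up_pos P j \<le> a + L))"
  proof (intro iffI; elim conjE)
    assume ij: "i \<in> {1..N}" "j \<in> {1..N}" "i < j"
    have m: "ins P' (up_pos P' i) (up_pos P' j) \<longleftrightarrow>
      (ins P (up_pos P i) (up_pos P j) \<or> (up_pos P i = p0 \<and> a < up_pos P j \<and> up_pos P j \<le> a + L))"
      using ins_main[OF up_props(1,2)[OF d] up_props(1,2)[OF d]] up_P' up_mono_iff[OF d] ij by auto
    {
      assume "ins P' (up_pos P' i) (up_pos P' j)"
      then show "i \<in> {1..N} \<and> j \<in> {1..N} \<and> i < j \<and>
        (ins P (up_pos P i) (up_pos P j) \<or> (up_pos P i = p0 \<and> a < up_pos P j \<and> up_pos P j \<le> a + L))"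
        using m ij by simp
    }
    {
      assume "ins P (up_pos P i) (up_pos P j) \<or> (up_pos P i = p0 \<and> a < up_pos P j \<and> up_pos P j \<le> a + L)"
      then show "i \<in> {1..N} \<and> j \<in> {1..N} \<and> i < j \<and> ins P' (up_pos P' i) (up_pos P' j)"
        using m ij by simp
    }
  qed
  also have "\<dots> \<longleftrightarrow> (j, i) \<in> dec N P \<or>
     (i \<in> {1..N} \<and> j \<in> {1..N} \<and> i < j \<and> up_pos P i = p0 \<and> a < up_pos P j \<and> up_pos P j \<le> a + L)"
    using dec_inside[OF d] unfolding ins_def by auto
  finally show ?thesis .
qed

definition "i0 = Suc (cnt P p0)"

lemma up_i0: "up_pos P i0 = p0" unfolding i0_def using up_pos_char[OF p0l p0_props(2)] .

lemma i0N: "i0 \<in> {1..N}"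
proof -
  have "cnt P (Suc p0) \<le> N" using cnt_le_N[OF d] .
  then show ?thesis using cnt_Suc[OF p0l] p0_props(2) unfolding i0_def by simp
qed

lemma EP_i0: "EP P i0 = cnt P a"
  unfolding EP_def using up_i0 p0_props(3) by simp

lemma EP_rot:
  assumes i: "i \<in> {1..N}"
  shows "EP P' i = (if i = i0 then cnt P (a + 1 + L) else EP P i)"
proof -
  have rowP': "(j, i) \<in> dec N P' \<longleftrightarrow> i < j \<and> j \<le> EP P' i" for j
    using dec_char[OF dP'] i unfolding decE_def by auto
  have rowP: "(j, i) \<in> dec N P \<longleftrightarrow> i < j \<and> j \<le> EP P i" for j
    using dec_char[OF d] i unfolding decE_def by auto
  have b': "i \<le> EP P' i" using EP_bounds[OF dP'] i by auto
  have b: "i \<le> EP P i" using EP_bounds[OF d] i by auto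
  show ?thesis
  proof (cases "i = i0")
    case False
    have ne: "up_pos P i \<noteq> p0"
    proof
      assume "up_pos P i = p0"
      then have "i - 1 = cnt P p0" using up_props(3)[OF d] i by fastforce
      then have "i = Suc (cnt P p0)" using i by auto
      then show False using False unfolding i0_def by simp
    qed
    have "(i < j \<and> j \<le> EP P' i) \<longleftrightarrow> (i < j \<and> j \<le> EP P i)" for j
      using dec_rot[of j i] rowP' rowP ne by auto
    then have "EP P' i = EP P i" using row_eq[OF b' b] by blast
    then show ?thesis using False by simp
  next
    case True
    define c where "c = cnt P (a + 1 + L)"
    have aF: "a < length P" "\<not> P ! a" using Pa by auto
    have cN: "c \<le> N" unfolding c_def using cnt_le_N[OF d] .
    have ca: "cnt P a \<le> c" unfolding c_def by (rule cnt_mono) simp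
    have ic: "i \<le> c" using b True EP_i0 ca by simp
    have "(i < j \<and> j \<le> EP P' i) \<longleftrightarrow> (i < j \<and> j \<le> c)" for j
    proof -
      have "(j, i) \<in> dec N P' \<longleftrightarrow> (i < j \<and> j \<le> cnt P a) \<or>
          (j \<in> {1..N} \<and> i < j \<and> a < up_pos P j \<and> up_pos P j \<le> a + L)"
        using dec_rot[of j i] rowP EP_i0 True up_i0 i by auto
      also have "\<dots> \<longleftrightarrow> (i < j \<and> j \<le> cnt P a) \<or> (j \<in> {1..N} \<and> i < j \<and> cnt P a < j \<and> j \<le> c)"
      proof -
        have "a < up_pos P j \<longleftrightarrow> cnt P a < j" if "j \<in> {1..N}"
          using up_after_match_iff[OF d _ _ aF] that by auto
        moreover have "up_pos P j \<le> a + L \<longleftrightarrow> j \<le> c" if "j \<in> {1..N}"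
        proof -
          have "up_pos P j < a + 1 + L \<longleftrightarrow> Suc (cnt P (up_pos P j)) \<le> cnt P (a + 1 + L)"
            using less_pos_iff[OF up_props(1,2)[OF d]] that by auto
          then show ?thesis using up_props(3)[OF d] that unfolding c_def by auto
        qed
        ultimately show ?thesis by blast
      qed
      also have "\<dots> \<longleftrightarrow> i < j \<and> j \<le> c" using ca cN i by auto
      finally show ?thesis using rowP' by simp
    qed
    then have "EP P' i = c" using row_eq[OF b' ic] by blast
    then show ?thesis using True c_def by simp
  qed
qed

lemma EP_rot_ge: "i \<in> {1..N} \<Longrightarrow> EP P i \<le> EP P' i"
  using EP_rot EP_i0 cnt_mono[of a "a + 1 + L" P] by auto

end

lemma rotation_EP:
  assumes d: "dyck N P" and r: "rotation P Q"
  shows "dyck N Q \<and> (\<forall>i\<in>{1..N}. EP P i \<le> EP Q i)"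
proof -
  obtain xs W zs where P: "P = xs @ [False] @ W @ zs" and bW: "balanced W" and Q: "Q = xs @ W @ [False] @ zs"
    using r unfolding rotation_def by blast
  interpret rot N P xs W zs using d P bW by unfold_locales
  show ?thesis using dP' EP_rot_ge Q unfolding P'_def by simp
qed

lemma tamari_EP:
  assumes d: "dyck N P" and t: "tamari_le P Q"
  shows "dyck N Q \<and> (\<forall>i\<in>{1..N}. EP P i \<le> EP Q i)"
proof -
  have "(P, Q) \<in> {(a, b). rotation a b}\<^sup>*" using t unfolding tamari_le_def .
  then show ?thesis
  proof (induction rule: rtrancl_induct)
    case base then show ?case using d by simp
  next
    case (step y z)
    then have "dyck N z \<and> (\<forall>i\<in>{1..N}. EP y i \<le> EP z i)" using rotation_EP by blast
    then show ?case using step.IH by (meson order.trans)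
  qed
qed


lemma first_diff:
  assumes "length u = length v" "u \<noteq> v"
  shows "\<exists>q<length u. take q u = take q v \<and> u ! q \<noteq> v ! q"
proof -
  have ex: "\<exists>q. q < length u \<and> u ! q \<noteq> v ! q" using assms nth_equalityI by blast
  define q where "q = (LEAST q. q < length u \<and> u ! q \<noteq> v ! q)"
  have q: "q < length u" "u ! q \<noteq> v ! q" using LeastI_ex[OF ex] unfolding q_def by auto
  have "\<forall>k<q. u ! k = v ! k"
  proof (intro allI impI)
    fix k assume k: "k < q"
    then have "\<not> (k < length u \<and> u ! k \<noteq> v ! k)" unfolding q_def by (rule not_less_Least)
    then show "u ! k = v ! k" using k q(1) by simp
  qed
  then have "take q u = take q v" using q(1) assms(1) by (intro nth_equalityI) auto
  then show ?thesis using q by blast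
qed

lemma take_take_eq: "take q u = take q v \<Longrightarrow> k \<le> q \<Longrightarrow> take k u = take k v"
proof -
  assume a: "take q u = take q v" "k \<le> q"
  have "take k u = take k (take q u)" "take k v = take k (take q v)" using a(2) by (simp_all add: min_def)
  then show ?thesis using a(1) by simp
qed

lemma take_height_eq: "take q u = take q v \<Longrightarrow> k \<le> q \<Longrightarrow> height u k = height v k"
  unfolding height_def using take_take_eq by metis

lemma take_cnt_eq: "take q u = take q v \<Longrightarrow> k \<le> q \<Longrightarrow> cnt u k = cnt v k"
  unfolding cnt_def using take_take_eq by metis

lemma inj_aux:
  assumes d: "dyck N u" and d': "dyck N v" and tq: "take q u = take q v"
    and q: "q < length u" "u ! q" "\<not> v ! q"
  shows "\<exists>i\<in>{1..N}. EP u i \<noteq> EP v i"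
proof -
  have lv: "length v = length u" using dyck_len[OF d] dyck_len[OF d'] by simp
  obtain p0 where p0: "p0 < q" "v ! p0" "match_pos v p0 = q" using matched_up[OF d' _ q(3)] q lv by auto
  have p0l: "p0 < length v" "p0 < length u" using p0 q lv by auto
  have "take q u ! p0 = take q v ! p0" using tq by simp
  then have up0: "u ! p0" using p0 by simp
  have hs: "height u k = height v k" if "k \<le> q" for k using take_height_eq[OF tq that] .
  have cs: "cnt u k = cnt v k" if "k \<le> q" for k using take_cnt_eq[OF tq that] .
  define i where "i = Suc (cnt v p0)"
  have upv: "up_pos v i = p0" unfolding i_def using up_pos_char[OF p0l(1) p0(2)] .
  have upu: "up_pos u i = p0" unfolding i_def using up_pos_char[OF p0l(2) up0] cs[of p0] p0 by simp
  have iN: "i \<in> {1..N}" unfolding i_def using cnt_le_N[OF d', of "Suc p0"] cnt_Suc[OF p0l(1)] p0(2) by simp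
  have Ev: "EP v i = cnt v q" unfolding EP_def upv p0 by simp
  have ins: "\<forall>k. p0 < k \<and> k \<le> Suc q \<longrightarrow> height u p0 < height u k"
  proof (intro allI impI)
    fix k assume k: "p0 < k \<and> k \<le> Suc q"
    have hq: "height v p0 < height v q" using match_props(5)[OF d' p0l(1) p0(2)] p0 by simp
    show "height u p0 < height u k"
    proof (cases "k \<le> q")
      case True
      then show ?thesis using match_props(5)[OF d' p0l(1) p0(2)] p0 k hs[of k] hs[of p0] by simp
    next
      case False
      then have "k = Suc q" using k by simp
      then show ?thesis using height_Suc[OF q(1)] q(2) hq hs[of q] hs[of p0] p0 by simp
    qed
  qed
  have "Suc q \<le> match_pos u p0" using inside_iff[OF d p0l(2) up0, of "Suc q"] ins p0 by simp
  then have "cnt u (Suc q) \<le> EP u i" unfolding EP_def upu by (simp add: cnt_mono)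
  moreover have "cnt u (Suc q) = cnt v q + 1" using cnt_Suc[OF q(1)] q(2) cs[of q] by simp
  ultimately have "EP u i \<noteq> EP v i" using Ev by simp
  then show ?thesis using iN by blast
qed

lemma EP_inj:
  assumes d: "dyck N u" and d': "dyck N v" and eq: "\<forall>i\<in>{1..N}. EP u i = EP v i"
  shows "u = v"
proof (rule ccontr)
  assume ne: "u \<noteq> v"
  have l: "length u = length v" using dyck_len[OF d] dyck_len[OF d'] by simp
  obtain q where q: "q < length u" "take q u = take q v" "u ! q \<noteq> v ! q" using first_diff[OF l ne] by blast
  show False
  proof (cases "u ! q")
    case True
    then show False using inj_aux[OF d d' q(2) q(1) True] q(3) eq by auto
  next
    case False
    then have "v ! q" using q(3) by simp
    then show False using inj_aux[OF d' d q(2)[symmetric]] q l False eq by auto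
  qed
qed

definition bot :: "nat \<Rightarrow> bool list" where "bot N = map even [0..<2 * N]"

lemma count_even: "count_list (map even [0..<m]) True = (m + 1) div 2"
  by (induction m) auto

lemma cnt_bot: "k \<le> 2 * N \<Longrightarrow> cnt (bot N) k = (k + 1) div 2"
  unfolding cnt_def bot_def by (simp add: take_map count_even min_def)

lemma dyck_bot: "dyck N (bot N)"
  unfolding dyck_def
proof (intro conjI allI impI)
  show "length (bot N) = 2 * N" unfolding bot_def by simp
  show "count_list (bot N) True = N" unfolding bot_def by (simp add: count_even)
  fix k assume k: "k \<le> length (bot N)"
  then have "k \<le> 2 * N" unfolding bot_def by simp
  then show "0 \<le> height (bot N) k" using height_cnt[of k "bot N"] k cnt_bot[of k N] by simp
qed

lemma match_next:
  assumes d: "dyck N w" and p: "p < length w" "w ! p" and s: "Suc p < length w" "\<not> w ! Suc p"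
  shows "match_pos w p = Suc p"
proof -
  have "Suc p \<le> match_pos w p" using match_props(1)[OF d p] by simp
  moreover have "\<not> Suc (Suc p) \<le> match_pos w p"
  proof
    assume "Suc (Suc p) \<le> match_pos w p"
    then have "height w p < height w (Suc (Suc p))" using match_props(5)[OF d p] by simp
    then show False using height_Suc[OF p(1)] height_Suc[OF s(1)] p(2) s(2) by simp
  qed
  ultimately show ?thesis by simp
qed

lemma EP_bot: "i \<in> {1..N} \<Longrightarrow> EP (bot N) i = i"
proof -
  assume i: "i \<in> {1..N}"
  define p where "p = 2 * (i - 1)"
  have pl: "p < length (bot N)" "Suc p < length (bot N)" using i unfolding p_def bot_def by auto
  have pt: "bot N ! p" "\<not> bot N ! Suc p" using pl unfolding p_def bot_def by auto
  have cp: "cnt (bot N) p = i - 1" using cnt_bot[of p N] pl unfolding p_def bot_def by simp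
  have "up_pos (bot N) i = p" using up_pos_char[OF pl(1) pt(1)] cp i by simp
  moreover have "match_pos (bot N) p = Suc p" using match_next[OF dyck_bot pl(1) pt(1) pl(2) pt(2)] .
  moreover have "cnt (bot N) (Suc p) = i" using cnt_bot[of "Suc p" N] pl i unfolding p_def bot_def by auto
  ultimately show ?thesis unfolding EP_def by simp
qed


lemma height_drop:
  assumes "u \<le> length w"
  shows "height w (u + r) = height w u + height (drop u w) r"
proof -
  have "w = take u w @ drop u w" by simp
  then have "height w (length (take u w) + r) = height (take u w) (length (take u w)) + height (drop u w) r"
    by (metis height_app2)
  moreover have "height (take u w) (length (take u w)) = height w u" using assms by (simp add: height_def)
  ultimately show ?thesis using assms by simp
qed

lemma height_take_le: "r \<le> L \<Longrightarrow> height (take L w) r = height w r"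
  unfolding height_def by (simp add: min_def)

lemma rotation_step:
  assumes d: "dyck N P" and v: "validE N E" and le: "\<forall>i\<in>{1..N}. EP P i \<le> E i"
    and ne: "\<exists>i\<in>{1..N}. EP P i < E i"
  shows "\<exists>P'. rotation P P' \<and> dyck N P' \<and> (\<forall>i\<in>{1..N}. EP P' i \<le> E i) \<and>
    (\<Sum>i\<in>{1..N}. E i - EP P' i) < (\<Sum>i\<in>{1..N}. E i - EP P i)"
proof -
  define S where "S = {i\<in>{1..N}. EP P i < E i}"
  have finS: "finite S" unfolding S_def by simp
  have neS: "S \<noteq> {}" using ne unfolding S_def by auto
  define i where "i = Max S"
  have iS: "i \<in> S" unfolding i_def using Max_in[OF finS neS] .
  have imax: "\<And>j. j \<in> S \<Longrightarrow> j \<le> i" unfolding i_def using Max_ge[OF finS] by blast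
  have iN: "i \<in> {1..N}" and ilt: "EP P i < E i" using iS unfolding S_def by auto
  define k where "k = Suc (EP P i)"
  have EPi: "i \<le> EP P i" using EP_bounds[OF d] iN by auto
  have kN: "k \<in> {1..N}" "i < k" "k \<le> E i" using ilt validE_D(2)[OF v iN] EPi unfolding k_def by auto
  have Ek: "EP P k = E k"
  proof -
    have "k \<notin> S" using imax kN(2) by fastforce
    then show ?thesis using le kN(1) unfolding S_def by fastforce
  qed
  define uk where "uk = up_pos P k"
  have uk: "uk < length P" "P ! uk" "cnt P uk = k - 1" using up_props[OF d] kN unfolding uk_def by auto
  have uk1: "1 \<le> uk"
  proof (rule ccontr)
    assume "\<not> 1 \<le> uk"
    then have "uk = 0" by simp
    then show False using uk(3) kN EPi iN by (simp add: cnt_def)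
  qed
  define pa where "pa = uk - 1"
  have pa: "pa < length P" "Suc pa = uk" using uk uk1 unfolding pa_def by auto
  have Ppa: "\<not> P ! pa"
  proof
    assume Ppa: "P ! pa"
    have ca: "cnt P uk = cnt P pa + 1" using cnt_Suc[OF pa(1)] Ppa pa(2) by simp
    have upa: "up_pos P (k - 1) = pa" using up_pos_char[OF pa(1) Ppa] ca uk(3) kN by simp
    have k1N: "k - 1 \<in> {1..N}" using kN EPi iN by auto
    have "(k, k - 1) \<in> dec N P"
    proof -
      have "\<forall>j. up_pos P (k - 1) < j \<and> j \<le> up_pos P k \<longrightarrow> height P j > height P (up_pos P (k - 1))"
      proof (intro allI impI)
        fix j assume j: "up_pos P (k - 1) < j \<and> j \<le> up_pos P k"
        then have "j = Suc pa" using upa pa unfolding uk_def by simp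
        then show "height P j > height P (up_pos P (k - 1))" using upa height_Suc[OF pa(1)] Ppa by simp
      qed
      then show ?thesis using dec_inside[OF d] k1N kN by auto
    qed
    then have kk: "k \<le> EP P (k - 1)" using dec_char[OF d] unfolding decE_def by auto
    show False
    proof (cases "k - 1 = i")
      case True then show False using kk unfolding k_def by simp
    next
      case False
      then have "i < k - 1" "k - 1 \<le> EP P i" using kN unfolding k_def by auto
      then have "EP P (k - 1) \<le> EP P i" using validE_D(3)[OF EP_valid[OF d] iN] by blast
      then show False using kk unfolding k_def by simp
    qed
  qed
  define mk where "mk = match_pos P uk"
  have mk: "uk < mk" "mk < length P" "\<not> P ! mk" "height P (Suc mk) = height P uk"
    "\<And>j. uk < j \<Longrightarrow> j \<le> mk \<Longrightarrow> height P j > height P uk"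
    using match_props[OF d uk(1,2)] unfolding mk_def by auto
  define LW where "LW = Suc mk - uk"
  define W where "W = take LW (drop uk P)"
  define xs where "xs = take pa P"
  define zs where "zs = drop (Suc mk) P"
  have lenW: "length W = LW" unfolding W_def LW_def using mk by simp
  have hWr: "height W r = height P (uk + r) - height P uk" if "r \<le> LW" for r
    using height_drop[of uk P r] uk(1) height_take_le[OF that] unfolding W_def by simp
  have Peq: "P = xs @ [False] @ W @ zs"
  proof -
    have "drop pa P = P ! pa # drop (Suc pa) P" using pa(1) by (rule Cons_nth_drop_Suc[symmetric])
    then have "drop pa P = P ! pa # drop uk P" using pa(2) by simp
    moreover have "drop uk P = W @ zs"
    proof -
      have "drop LW (drop uk P) = zs" unfolding zs_def LW_def using mk by simp
      then show ?thesis unfolding W_def by (metis append_take_drop_id)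
    qed
    ultimately have "drop pa P = [False] @ W @ zs" using Ppa by simp
    then show ?thesis unfolding xs_def by (metis append_take_drop_id)
  qed
  have hWL: "height W LW = 0" using hWr[of LW] mk unfolding LW_def by simp
  have hWpos: "height W r > 0" if "0 < r" "r < LW" for r
    using hWr[of r] mk(5)[of "uk + r"] that unfolding LW_def by simp
  have hWnn: "height W r \<ge> 0" if "r \<le> LW" for r
    using hWpos[of r] hWL that by (cases "r = 0"; cases "r = LW") auto
  have cW: "2 * int (cnt W LW) = int LW" using cnt_height[of LW W] hWL lenW by simp
  have evL: "even LW" using cW by presburger
  have cWL: "count_list W True = LW div 2" using cW lenW cnt_len[of W LW] by simp
  have balW: "balanced W" unfolding balanced_def dyck_def using lenW evL cWL hWnn by auto
  have W0: "W \<noteq> []" "hd W = True"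
  proof -
    show "W \<noteq> []" using lenW mk unfolding LW_def by auto
    then show "hd W = True" unfolding W_def using uk(2) mk unfolding LW_def by (simp add: hd_conv_nth)
  qed
  have minW: "\<forall>r. 0 < r \<and> r < length W \<longrightarrow> \<not> balanced (take r W)"
  proof (intro allI impI notI)
    fix r assume r: "0 < r \<and> r < length W" and b: "balanced (take r W)"
    then have "height (take r W) (length (take r W)) = 0" using dyck_end unfolding balanced_def by blast
    then have "height W r = 0" using r height_take_le[of r r W] by simp
    then show False using hWpos[of r] r lenW by simp
  qed
  define Pn where "Pn = xs @ W @ [False] @ zs"
  have rotP: "rotation P Pn" unfolding rotation_def Pn_def using Peq balW W0 minW by blast
  have R: "rot N P xs W zs" using d Peq balW by unfold_locales
  interpret rot N P xs W zs by (rule R)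
  have aa: "rot.a xs = pa" using rot.a_def[OF R] pa unfolding xs_def by simp
  have LL: "rot.L W = LW" using rot.L_def[OF R] lenW by simp
  have PP: "rot.P' xs W zs = Pn" using rot.P'_def[OF R] unfolding Pn_def by simp
  have dP'': "dyck N Pn" using dP' PP by simp
  have c_end: "cnt P (rot.a xs + 1 + rot.L W) = EP P k"
  proof -
    have "pa + 1 + LW = Suc mk" unfolding LW_def using pa mk by simp
    then show ?thesis using cnt_Suc[OF mk(2)] mk(3) aa LL unfolding EP_def uk_def[symmetric] mk_def[symmetric] by simp
  qed
  have EPi0: "EP P i0 = k - 1"
  proof -
    have "cnt P uk = cnt P pa" using cnt_Suc[OF pa(1)] Ppa pa(2) by simp
    then show ?thesis using EP_i0 aa uk(3) by simp
  qed
  have i0i: "i0 \<le> i"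
  proof (rule ccontr)
    assume "\<not> i0 \<le> i"
    then have ii0: "i < i0" by simp
    have "i0 \<le> EP P i0" using EP_bounds(1)[OF d] i0N by auto
    then have "i0 \<le> EP P i" using EPi0 unfolding k_def by simp
    then have "(i0, i) \<in> dec N P" using dec_char[OF d] ii0 iN unfolding decE_def by auto
    then have dd: "up_pos P i < up_pos P i0" "up_pos P i0 < match_pos P (up_pos P i)" unfolding dec_def by auto
    have "match_pos P (up_pos P i0) < match_pos P (up_pos P i)"
      using noncross[OF d up_props(1,2)[OF d] up_props(1,2)[OF d] dd] iN i0N by auto
    then have lt: "pa < match_pos P (up_pos P i)" using up_i0 p0_props(3) aa by simp
    have "match_pos P (up_pos P i) \<noteq> uk" using match_props(3)[OF d up_props(1,2)[OF d]] iN uk(2) by auto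
    then have "uk < match_pos P (up_pos P i)" using lt pa by simp
    then have "cnt P (Suc uk) \<le> EP P i" unfolding EP_def by (simp add: cnt_mono)
    then show False using cnt_Suc[OF uk(1)] uk(2,3) kN unfolding k_def by simp
  qed
  have EPni0: "EP Pn i0 = E k" using EP_rot[OF i0N] PP c_end Ek aa LL by simp
  have Eki0: "E k \<le> E i0"
  proof (cases "i0 = i")
    case True then show ?thesis using validE_D(3)[OF v iN] kN by simp
  next
    case False
    then have "i0 < i" using i0i by simp
    moreover have "i \<le> E i0" using EPi0 le i0N EPi unfolding k_def by force
    ultimately have "E i \<le> E i0" using validE_D(3)[OF v i0N] by blast
    moreover have "i0 < k" using i0i kN by simp
    ultimately show ?thesis using validE_D(3)[OF v i0N] kN by simp
  qed
  have le': "\<forall>j\<in>{1..N}. EP Pn j \<le> E j"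
  proof
    fix j assume j: "j \<in> {1..N}"
    show "EP Pn j \<le> E j"
    proof (cases "j = i0")
      case True then show ?thesis using EPni0 Eki0 by simp
    next
      case False then show ?thesis using EP_rot[OF j] PP le j by simp
    qed
  qed
  have sum: "(\<Sum>j\<in>{1..N}. E j - EP Pn j) < (\<Sum>j\<in>{1..N}. E j - EP P j)"
  proof (rule sum_strict_mono_ex1)
    show "finite {1..N}" by simp
    show "\<forall>j\<in>{1..N}. E j - EP Pn j \<le> E j - EP P j" using EP_rot_ge PP by (simp add: diff_le_mono2)
    have "EP P k \<ge> k" using EP_bounds[OF d] kN by auto
    then have "E i0 - EP Pn i0 < E i0 - EP P i0" using EPni0 EPi0 Eki0 Ek kN by simp
    then show "\<exists>j\<in>{1..N}. E j - EP Pn j < E j - EP P j" using i0N by blast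
  qed
  show ?thesis using rotP dP'' le' sum by blast
qed

lemma climb:
  assumes v: "validE N E"
  shows "dyck N P \<Longrightarrow> \<forall>i\<in>{1..N}. EP P i \<le> E i \<Longrightarrow>
    \<exists>Q. tamari_le P Q \<and> dyck N Q \<and> (\<forall>i\<in>{1..N}. EP Q i = E i)"
proof (induction "\<Sum>i\<in>{1..N}. E i - EP P i" arbitrary: P rule: less_induct)
  case less
  show ?case
  proof (cases "\<exists>i\<in>{1..N}. EP P i < E i")
    case False
    then have "\<forall>i\<in>{1..N}. EP P i = E i" using less.prems by force
    then show ?thesis using less.prems unfolding tamari_le_def by blast
  next
    case True
    obtain P' where P': "rotation P P'" "dyck N P'" "\<forall>i\<in>{1..N}. EP P' i \<le> E i"
      "(\<Sum>i\<in>{1..N}. E i - EP P' i) < (\<Sum>i\<in>{1..N}. E i - EP P i)"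
      using rotation_step[OF less.prems(1) v less.prems(2) True] by blast
    obtain Q where Q: "tamari_le P' Q" "dyck N Q" "\<forall>i\<in>{1..N}. EP Q i = E i"
      using less.hyps[OF P'(4) P'(2,3)] by blast
    have "tamari_le P Q" using P'(1) Q(1) unfolding tamari_le_def
      by (meson case_prodI converse_rtrancl_into_rtrancl mem_Collect_eq)
    then show ?thesis using Q by blast
  qed
qed


lemma cnt_allT:
  assumes "\<forall>k. x \<le> k \<and> k < y \<longrightarrow> w ! k" "x \<le> y" "y \<le> length w"
  shows "cnt w y = cnt w x + (y - x)"
  using assms
proof (induction y)
  case 0 then show ?case by simp
next
  case (Suc y)
  show ?case
  proof (cases "x = Suc y")
    case True then show ?thesis by simp
  next
    case False
    then have "x \<le> y" using Suc.prems by simp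
    then have "cnt w y = cnt w x + (y - x)" using Suc by simp
    moreover have "w ! y" using Suc.prems \<open>x \<le> y\<close> by simp
    ultimately show ?thesis using cnt_Suc[of y w] Suc.prems \<open>x \<le> y\<close> by simp
  qed
qed

lemma cnt_noT:
  assumes "\<forall>k. x \<le> k \<and> k < y \<longrightarrow> \<not> w ! k" "x \<le> y" "y \<le> length w"
  shows "cnt w y = cnt w x"
  using assms
proof (induction y)
  case 0 then show ?case by simp
next
  case (Suc y)
  show ?case
  proof (cases "x = Suc y")
    case True then show ?thesis by simp
  next
    case False
    then have "x \<le> y" using Suc.prems by simp
    then have "cnt w y = cnt w x" using Suc by simp
    moreover have "\<not> w ! y" using Suc.prems \<open>x \<le> y\<close> by simp
    ultimately show ?thesis using cnt_Suc[of y w] Suc.prems \<open>x \<le> y\<close> by simp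
  qed
qed

definition runend :: "bool list \<Rightarrow> nat \<Rightarrow> bool" where
  "runend w p \<longleftrightarrow> p < length w \<and> w ! p \<and> (Suc p = length w \<or> \<not> w ! Suc p)"

lemma prefix_dvd:
  assumes h: "\<forall>p. runend w p \<and> p < a \<longrightarrow> (m::nat) dvd cnt w (Suc p)" and a: "a \<le> length w"
    and b: "a = 0 \<or> \<not> w ! (a - 1)"
  shows "m dvd cnt w a"
proof (cases "\<exists>p<a. w ! p")
  case False
  then have "cnt w a = cnt w 0" using cnt_noT[of 0 a w] a by auto
  then show ?thesis by (simp add: cnt_def)
next
  case True
  define T where "T = {p. p < a \<and> w ! p}"
  have fin: "finite T" unfolding T_def by simp
  have ne: "T \<noteq> {}" using True unfolding T_def by auto
  define p where "p = Max T"
  have pT: "p < a" "w ! p" using Max_in[OF fin ne] unfolding p_def T_def by auto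
  have pmax: "\<And>q. q < a \<Longrightarrow> w ! q \<Longrightarrow> q \<le> p" using Max_ge[OF fin] unfolding p_def T_def by auto
  have sp: "Suc p \<noteq> a" using b pT by auto
  then have sp2: "Suc p < a" using pT by simp
  have nT: "\<forall>k. Suc p \<le> k \<and> k < a \<longrightarrow> \<not> w ! k" using pmax by fastforce
  have "runend w p" unfolding runend_def using pT sp2 a nT by auto
  then have "m dvd cnt w (Suc p)" using h pT by blast
  moreover have "cnt w a = cnt w (Suc p)" using cnt_noT[OF nT] sp2 a by simp
  ultimately show ?thesis by simp
qed

lemma runs_div_imp:
  assumes r: "runs_div m w"
  shows "runend w p \<Longrightarrow> m dvd cnt w (Suc p)"
proof (induction p rule: less_induct)
  case (less p)
  have pl: "p < length w" "w ! p" using less.prems unfolding runend_def by auto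
  define Q where "Q a \<longleftrightarrow> (\<forall>k. a \<le> k \<and> k \<le> p \<longrightarrow> w ! k)" for a
  have Qp: "Q p" unfolding Q_def using pl by auto
  define a where "a = (LEAST a. Q a)"
  have Qa: "Q a" unfolding a_def using LeastI[of Q p] Qp .
  have ap: "a \<le> p" unfolding a_def using Least_le[of Q p] Qp .
  have bd: "a = 0 \<or> \<not> w ! (a - 1)"
  proof (rule ccontr)
    assume "\<not> (a = 0 \<or> \<not> w ! (a - 1))"
    then have "a > 0" "w ! (a - 1)" by auto
    have "Q (a - 1)" unfolding Q_def
    proof (intro allI impI)
      fix k assume k: "a - 1 \<le> k \<and> k \<le> p"
      show "w ! k"
      proof (cases "k = a - 1")
        case True then show ?thesis using \<open>w ! (a - 1)\<close> by simp
      next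
        case False then show ?thesis using Qa k unfolding Q_def by auto
      qed
    qed
    then have "a \<le> a - 1" unfolding a_def by (rule Least_le)
    then show False using \<open>a > 0\<close> by simp
  qed
  have allT: "\<forall>k. a \<le> k \<and> k < Suc p \<longrightarrow> w ! k" using Qa unfolding Q_def by auto
  have "a \<le> Suc p \<and> Suc p \<le> length w \<and> (\<forall>k. a \<le> k \<and> k < Suc p \<longrightarrow> w ! k) \<and>
      (a = 0 \<or> \<not> w ! (a - 1)) \<and> (Suc p = length w \<or> \<not> w ! Suc p)"
    using ap pl allT bd less.prems unfolding runend_def by auto
  then have "m dvd (Suc p - a)" using r unfolding runs_div_def by blast
  moreover have "m dvd cnt w a"
  proof (rule prefix_dvd)
    show "\<forall>q. runend w q \<and> q < a \<longrightarrow> m dvd cnt w (Suc q)" using less.IH ap by auto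
    show "a \<le> length w" using ap pl by simp
    show "a = 0 \<or> \<not> w ! (a - 1)" using bd .
  qed
  moreover have "cnt w (Suc p) = cnt w a + (Suc p - a)" using cnt_allT[OF allT] ap pl by simp
  ultimately show ?case by simp
qed

lemma imp_runs_div:
  assumes h: "\<forall>p. runend w p \<longrightarrow> (m::nat) dvd cnt w (Suc p)"
  shows "runs_div m w"
  unfolding runs_div_def
proof (intro allI impI)
  fix a b assume ab: "a \<le> b \<and> b \<le> length w \<and> (\<forall>k. a \<le> k \<and> k < b \<longrightarrow> w ! k) \<and>
      (a = 0 \<or> \<not> w ! (a - 1)) \<and> (b = length w \<or> \<not> w ! b)"
  show "m dvd (b - a)"
  proof (cases "a = b")
    case True then show ?thesis by simp
  next
    case False
    then have lt: "a < b" using ab by simp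
    have "runend w (b - 1)" unfolding runend_def using ab lt by auto
    then have "m dvd cnt w (Suc (b - 1))" using h by blast
    then have "m dvd cnt w b" using lt by simp
    moreover have "m dvd cnt w a" using prefix_dvd[of w a m] h ab by auto
    moreover have "cnt w b = cnt w a + (b - a)" using cnt_allT[of a b w] ab by simp
    ultimately show ?thesis by (simp add: dvd_add_right_iff)
  qed
qed

lemma runs_div_iff: "runs_div m w \<longleftrightarrow> (\<forall>p. runend w p \<longrightarrow> m dvd cnt w (Suc p))"
  using runs_div_imp imp_runs_div by blast

lemma lt_EP_iff:
  assumes d: "dyck N w" and l: "l \<in> {1..N}"
  shows "l < EP w l \<longleftrightarrow> Suc (up_pos w l) < length w \<and> w ! Suc (up_pos w l)"
proof
  assume lt: "l < EP w l"
  have up: "up_pos w l < length w" "w ! up_pos w l" "cnt w (up_pos w l) = l - 1" using up_props[OF d] l by auto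
  have lN: "Suc l \<in> {1..N}" using lt EP_bounds[OF d] l by fastforce
  have "(Suc l, l) \<in> dec N w" using dec_char[OF d] lt l unfolding decE_def by auto
  then have dd: "up_pos w l < up_pos w (Suc l)" "up_pos w (Suc l) < match_pos w (up_pos w l)" unfolding dec_def by auto
  have "up_pos w (Suc l) < length w" using up_props(1)[OF d] lN by auto
  then have sl: "Suc (up_pos w l) < length w" using dd(1) by simp
  have "w ! Suc (up_pos w l)"
  proof (rule ccontr)
    assume "\<not> w ! Suc (up_pos w l)"
    then have "match_pos w (up_pos w l) = Suc (up_pos w l)" using match_next[OF d up(1,2) sl] by simp
    then show False using dd by simp
  qed
  then show "Suc (up_pos w l) < length w \<and> w ! Suc (up_pos w l)" using sl by simp
next
  assume a: "Suc (up_pos w l) < length w \<and> w ! Suc (up_pos w l)"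
  have up: "up_pos w l < length w" "w ! up_pos w l" "cnt w (up_pos w l) = l - 1" using up_props[OF d] l by auto
  have c: "cnt w (Suc (up_pos w l)) = l" using cnt_Suc[OF up(1)] up l by simp
  have u2: "up_pos w (Suc l) = Suc (up_pos w l)" using up_pos_char[of "Suc (up_pos w l)" w] a c by simp
  have lN: "Suc l \<in> {1..N}"
  proof -
    have "cnt w (Suc (Suc (up_pos w l))) \<le> N" by (rule cnt_le_N[OF d])
    then show ?thesis using cnt_Suc[of "Suc (up_pos w l)" w] a c by simp
  qed
  have "\<forall>k. up_pos w l < k \<and> k \<le> up_pos w (Suc l) \<longrightarrow> height w k > height w (up_pos w l)"
  proof (intro allI impI)
    fix k assume "up_pos w l < k \<and> k \<le> up_pos w (Suc l)"
    then have "k = Suc (up_pos w l)" using u2 by simp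
    then show "height w k > height w (up_pos w l)" using height_Suc[OF up(1)] up(2) by simp
  qed
  then have "(Suc l, l) \<in> dec N w" using dec_inside[OF d] l lN by auto
  then show "l < EP w l" using dec_char[OF d] unfolding decE_def by auto
qed

lemma runs_EP:
  assumes d: "dyck N w"
  shows "runs_div m w \<longleftrightarrow> (\<forall>l\<in>{1..N}. \<not> l < EP w l \<longrightarrow> m dvd l)"
proof -
  have re: "runend w (up_pos w l) \<longleftrightarrow> \<not> l < EP w l" if l: "l \<in> {1..N}" for l
  proof -
    have "up_pos w l < length w" "w ! up_pos w l" using up_props[OF d] l by auto
    then show ?thesis using lt_EP_iff[OF d l] unfolding runend_def by auto
  qed
  have cl: "cnt w (Suc (up_pos w l)) = l" if l: "l \<in> {1..N}" for l
    using cnt_Suc[of "up_pos w l" w] up_props[OF d] l by auto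
  show ?thesis unfolding runs_div_iff
  proof (intro iffI ballI impI allI)
    fix l assume h: "\<forall>p. runend w p \<longrightarrow> m dvd cnt w (Suc p)" and l: "l \<in> {1..N}" and n: "\<not> l < EP w l"
    then have "runend w (up_pos w l)" using re[OF l] by simp
    then have "m dvd cnt w (Suc (up_pos w l))" using h by blast
    then show "m dvd l" using cl[OF l] by simp
  next
    fix p assume h: "\<forall>l\<in>{1..N}. \<not> l < EP w l \<longrightarrow> m dvd l" and p: "runend w p"
    have pl: "p < length w" "w ! p" using p unfolding runend_def by auto
    define l where "l = Suc (cnt w p)"
    have up: "up_pos w l = p" unfolding l_def using up_pos_char[OF pl] .
    have lN: "l \<in> {1..N}" unfolding l_def using cnt_le_N[OF d, of "Suc p"] cnt_Suc[OF pl(1)] pl(2) by simp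
    have "\<not> l < EP w l" using re[OF lN] up p by simp
    then have "m dvd l" using h lN by blast
    then show "m dvd cnt w (Suc p)" using cl[OF lN] up by simp
  qed
qed


lemma chain_arith1:
  assumes m: "m \<ge> 1" and l: "l \<in> {1..n * m}" and nd: "\<not> m dvd l"
  shows "\<exists>i k. i \<in> {1..n} \<and> k + 1 < m \<and> i * m - k = Suc l \<and> i * m - k - 1 = l"
proof -
  define q where "q = l div m"
  define r where "r = l mod m"
  have lq: "l = q * m + r" unfolding q_def r_def by simp
  have r0: "0 < r" "r < m" using nd m unfolding r_def by (auto simp: dvd_eq_mod_eq_0)
  have "l \<noteq> n * m" using nd by auto
  then have "l < n * m" using l by simp
  then have qn: "q < n"
  proof -
    assume "l < n * m"
    show "q < n"
    proof (rule ccontr)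
      assume "\<not> q < n"
      then have "n * m \<le> q * m" using mult_le_mono1 by (metis not_less)
      then show False using \<open>l < n * m\<close> lq by linarith
    qed
  qed
  define i where "i = Suc q"
  define k where "k = m - 1 - r"
  have "i * m - k = Suc l" unfolding i_def k_def using lq r0 by (simp add: algebra_simps)
  moreover have "i \<in> {1..n}" "k + 1 < m" unfolding i_def k_def using qn r0 by auto
  moreover have "i * m - k - 1 = l" using calculation(1) by simp
  ultimately show ?thesis by blast
qed

lemma chain_arith2:
  assumes m: "m \<ge> 1" and i: "i \<in> {1..n}" and k: "k + 1 < m"
  shows "i * m - k = Suc (i * m - k - 1) \<and> i * m - k - 1 \<in> {1..n * m} \<and> \<not> m dvd (i * m - k - 1)"
proof -
  obtain q where q: "i = Suc q" using i by (cases i) auto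
  define r where "r = m - k - 1"
  have r: "0 < r" "r < m" unfolding r_def using k by auto
  have e: "i * m - k - 1 = q * m + r" unfolding r_def q using k by (simp add: algebra_simps)
  have "(q * m + r) mod m = r" using r by simp
  then have "\<not> m dvd (q * m + r)" using r by (auto simp: dvd_eq_mod_eq_0)
  moreover have "q * m + r \<le> n * m"
  proof -
    have "q < n" using i q by simp
    then have "Suc q * m \<le> n * m" by (metis Suc_leI mult_le_mono1)
    then show ?thesis using r by simp
  qed
  moreover have "i * m - k = Suc (i * m - k - 1)" using e r q by simp
  ultimately show ?thesis using e r by simp
qed

lemma chain_iff:
  assumes T: "twoE (n * m) E1 E2" and m: "m \<ge> 1"
  shows "chain_cond n m (RE (n * m) E1 E2) \<longleftrightarrow> (\<forall>l\<in>{1..n * m}. \<not> m dvd l \<longrightarrow> l < E1 l)"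
proof -
  interpret twoE "n * m" E1 E2 by (rule T)
  have key: "(Suc l, l) \<in> RE (n * m) E1 E2 \<longleftrightarrow> l \<in> {1..n * m} \<and> l < E1 l" for l
  proof -
    have "(Suc l, l) \<in> RE (n * m) E1 E2 \<longleftrightarrow> (Suc l, l) \<in> decE (n * m) E1"
      using RE_dec_part by blast
    then show ?thesis unfolding decE_def by auto
  qed
  show ?thesis
  proof
    assume c: "chain_cond n m (RE (n * m) E1 E2)"
    show "\<forall>l\<in>{1..n * m}. \<not> m dvd l \<longrightarrow> l < E1 l"
    proof (intro ballI impI)
      fix l assume l: "l \<in> {1..n * m}" and nd: "\<not> m dvd l"
      obtain i k where ik: "i \<in> {1..n}" "k + 1 < m" "i * m - k = Suc l" "i * m - k - 1 = l"
        using chain_arith1[OF m l nd] by blast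
      have "(i * m - k, i * m - k - 1) \<in> RE (n * m) E1 E2" using c ik unfolding chain_cond_def by blast
      then show "l < E1 l" using key ik by simp
    qed
  next
    assume h: "\<forall>l\<in>{1..n * m}. \<not> m dvd l \<longrightarrow> l < E1 l"
    show "chain_cond n m (RE (n * m) E1 E2)" unfolding chain_cond_def
    proof (intro ballI allI impI)
      fix i k assume i: "i \<in> {1..n}" and k: "k + 1 < m"
      note a = chain_arith2[OF m i k]
      then have "(Suc (i * m - k - 1), i * m - k - 1) \<in> RE (n * m) E1 E2" using key h by blast
      then show "(i * m - k, i * m - k - 1) \<in> RE (n * m) E1 E2" using a by simp
    qed
  qed
qed

lemma E_cong:
  assumes "\<forall>i\<in>{1..N}. E i = E' i"
  shows "decE N E = decE N E'" "incE N E = incE N E'" "RE N E F = RE N E' F" "RE N F E = RE N F E'"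
proof -
  show d: "decE N E = decE N E'" unfolding decE_def using assms by auto
  have "incbE N E = incbE N E'" unfolding incbE_def using assms by auto
  then show i: "incE N E = incE N E'" unfolding incE_def by simp
  show "RE N E F = RE N E' F" unfolding RE_def using d by simp
  show "RE N F E = RE N F E'" unfolding RE_def using i by simp
qed

lemma IP_RE:
  assumes "dyck N P" "dyck N Q"
  shows "IP N P Q = RE N (EP P) (EP Q)"
  unfolding IP_def RE_def inc_def incE_def using dec_char[OF assms(1)] inc_base_char[OF assms(2)] by simp

theorem theorem4p6:
  fixes n m :: nat
  assumes "n \<ge> 1" and "m \<ge> 1"
  shows "bij_betw (\<lambda>(P, Q). IP (n * m) P Q)
           {(P, Q). P \<in> mpaths n m \<and> Q \<in> mpaths n m \<and> tamari_le P Q}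
           {R. interval_poset (n * m) R \<and> chain_cond n m R}"
proof -
  define N where "N = n * m"
  have m: "m \<ge> 1" using assms by simp
  have twoPQ: "twoE N (EP P) (EP Q)" if "dyck N P" "tamari_le P Q" for P Q
    using EP_valid[OF that(1)] EP_valid tamari_EP[OF that] by unfold_locales auto
  have mem: "P \<in> mpaths n m \<longleftrightarrow> dyck N P \<and> (\<forall>l\<in>{1..N}. \<not> l < EP P l \<longrightarrow> m dvd l)" for P
    unfolding mpaths_def N_def using runs_EP by blast
  show ?thesis unfolding bij_betw_def N_def[symmetric]
  proof (intro conjI)
    show "inj_on (\<lambda>(P, Q). IP N P Q) {(P, Q). P \<in> mpaths n m \<and> Q \<in> mpaths n m \<and> tamari_le P Q}"
    proof (rule inj_onI, clarify)
      fix P Q P' Q' assume a: "P \<in> mpaths n m" "Q \<in> mpaths n m" "tamari_le P Q"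
        "P' \<in> mpaths n m" "Q' \<in> mpaths n m" "tamari_le P' Q'" and eq: "IP N P Q = IP N P' Q'"
      have d: "dyck N P" "dyck N Q" "dyck N P'" "dyck N Q'" using a mem by auto
      interpret A: twoE N "EP P" "EP Q" using twoPQ d a by blast
      interpret B: twoE N "EP P'" "EP Q'" using twoPQ d a by blast
      have R: "RE N (EP P) (EP Q) = RE N (EP P') (EP Q')" using eq IP_RE d by simp
      have "decE N (EP P) = decE N (EP P')" using A.RE_dec_part B.RE_dec_part R by simp
      then have "\<forall>i\<in>{1..N}. EP P i = EP P' i" using dec_determines EP_valid d by blast
      then have "P = P'" using EP_inj d by blast
      moreover have "incE N (EP Q) = incE N (EP Q')" using A.RE_inc_part B.RE_inc_part R by simp
      then have "\<forall>i\<in>{1..N}. EP Q i = EP Q' i" using inc_determines EP_valid d by blast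
      then have "Q = Q'" using EP_inj d by blast
      ultimately show "P = P' \<and> Q = Q'" by simp
    qed
    show "(\<lambda>(P, Q). IP N P Q) ` {(P, Q). P \<in> mpaths n m \<and> Q \<in> mpaths n m \<and> tamari_le P Q} =
      {R. interval_poset N R \<and> chain_cond n m R}"
    proof (intro set_eqI iffI)
      fix R assume "R \<in> (\<lambda>(P, Q). IP N P Q) ` {(P, Q). P \<in> mpaths n m \<and> Q \<in> mpaths n m \<and> tamari_le P Q}"
      then obtain P Q where a: "P \<in> mpaths n m" "Q \<in> mpaths n m" "tamari_le P Q" and R: "R = IP N P Q" by blast
      have d: "dyck N P" "dyck N Q" using a mem by auto
      interpret A: twoE N "EP P" "EP Q" using twoPQ d a by blast
      have R': "R = RE N (EP P) (EP Q)" using R IP_RE d by simp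
      have "interval_poset N R" using A.RE_interval_poset R' by simp
      moreover have "chain_cond n m R"
        using chain_iff[of n m "EP P" "EP Q"] A.twoE_axioms m mem a(1) R' unfolding N_def by auto
      ultimately show "R \<in> {R. interval_poset N R \<and> chain_cond n m R}" by simp
    next
      fix R assume "R \<in> {R. interval_poset N R \<and> chain_cond n m R}"
      then have ip: "interval_poset N R" and ch: "chain_cond n m R" by auto
      obtain E1 E2 where E: "validE N E1" "validE N E2" "\<forall>i\<in>{1..N}. E1 i \<le> E2 i" and RE: "R = RE N E1 E2"
        using ip_to_E[OF ip] by blast
      have T: "twoE N E1 E2" using E by unfold_locales auto
      have runs: "\<forall>l\<in>{1..N}. \<not> m dvd l \<longrightarrow> l < E1 l"
        using chain_iff[of n m E1 E2] T ch RE m unfolding N_def by auto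
      obtain P where P: "tamari_le (bot N) P" "dyck N P" "\<forall>i\<in>{1..N}. EP P i = E1 i"
        using climb[OF E(1) dyck_bot] EP_bot validE_D(1)[OF E(1)] by fastforce
      obtain Q where Q: "tamari_le P Q" "dyck N Q" "\<forall>i\<in>{1..N}. EP Q i = E2 i"
        using climb[OF E(2) P(2)] P(3) E(3) by fastforce
      have PM: "P \<in> mpaths n m" using mem P runs by auto
      have QM: "Q \<in> mpaths n m"
      proof -
        have "\<forall>l\<in>{1..N}. \<not> l < EP Q l \<longrightarrow> m dvd l"
        proof (intro ballI impI)
          fix l assume l: "l \<in> {1..N}" "\<not> l < EP Q l"
          then have "\<not> l < E1 l" using Q(3) E(3) by fastforce
          then show "m dvd l" using runs l by blast
        qed
        then show ?thesis using mem Q(2) by blast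
      qed
      have "IP N P Q = RE N E1 E2"
        using IP_RE[OF P(2) Q(2)] E_cong(3)[OF P(3)] E_cong(4)[OF Q(3)] by simp
      then have "R = (\<lambda>(P, Q). IP N P Q) (P, Q)" using RE by simp
      then show "R \<in> (\<lambda>(P, Q). IP N P Q) ` {(P, Q). P \<in> mpaths n m \<and> Q \<in> mpaths n m \<and> tamari_le P Q}"
        using PM QM Q(1) by blast
    qed
  qed
qed


end
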